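(* Let $\gamma=\{t_0<t_1<\dots<t_k\}\subset\mathbb{Z}_+$ be a finite nonempty set ($k\ge 0$), and define $G_\gamma(\bar\eta):=\mathcal E\big[\Psi_\gamma(\widehat\zeta)\,\big|\,\eta_{t_0}=\bar\eta\big]$, $\bar\eta\in\Omega$ (the conditional expectation of $\Psi_\gamma$ given $\mathfrak M_{t_0}$, viewed as a function of $\eta_{t_0}$). Then $G_\gamma\in\mathcal H_M$ and $$\|G_\gamma\|_M\le M^{|\gamma|}\,\bar\mu^{\lfloor |\gamma|/2\rfloor}\,(1+2\bar\mu)^{\lfloor (|\gamma|-1)/2\rfloor}\le C\,\mu_*^{|\gamma|},$$ where $\lfloor\cdot\rfloor$ is the integer part and $C>0$ is a constant independent of $\gamma$.
   Context: Model. Fix $d\ge1$. $(X_t,\xi_t)_{t\in\mathbb{Z}_+}$ is a Markov chain with $X_t\in\mathbb{Z}^d$, $X_0=0$, $\xi_t\in\Omega:=\{-1,+1\}^{\mathbb{Z}^d}$. Given $X_t=x,\xi_t=\bar\xi$, the next position and the next environment are conditionally independent; $P(X_{t+1}=x+u\mid X_t=x,\xi_t=\bar\xi)=P_0(u)+\epsilon c(u)\bar\xi(x)$, where $\epsilon>0$, $P_0$ is an even, finite-range probability distribution on $\mathbb{Z}^d$ with $|\sum_u P_0(u)e^{i(\lambda,u)}|=1$ iff $\lambda=0$ and such that $1/\tilde p_0(\lambda)$ (with $\tilde p_0(\lambda)=\sum_u P_0(u)e^{i(\lambda,u)}$) has absolutely summable Fourier coefficients, and $c$ is an odd finite-range real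 function with $P_0(u)\pm\epsilon c(u)\in[0,1)$. Given $X_t=x,\xi_t=\bar\xi$, the values $\xi_{t+1}(y)$, $y\in\mathbb{Z}^d$, are independent with $P(\xi_{t+1}(y)=s)=Q_0(\bar\xi(y),s)$ if $y\ne x$ and $Q_1(\bar\xi(y),s)$ if $y=x$, where $Q_0,Q_1$ are symmetric $2\times2$ stochastic matrices, $Q_0$ has eigenvalues $1,\mu$ with $0<|\mu|<1$, and $Q_1-Q_0=O(\epsilon)$. The environment seen from the walk, $\eta_t(x)=\xi_t(X_t+x)$, is a Markov chain on $\Omega$ with stochastic operator $(\mathcal T f)(\bar\eta)=\mathcal E[f(\eta_{t+1})\mid\eta_t=\bar\eta]$. $\Pi_0$ is the product of uniform measures on $\{\pm1\}$. For finite $\Gamma\subset\mathbb{Z}^d$ let $\Phi_\Gamma(\eta)=\prod_{x\in\Gamma}\eta(x)$, $\Phi_\emptyset=1$; each $f\in L^2(\Omega,\Pi_0)$ is written $f=\sum_\Gamma f_\Gamma\Phi_\Gamma$. For a fixed $M>1$, $\mathcal H_M=\{f:\|f\|_M:=\sum_\Gamma|f_\Gamma|M^{|\Gamma|}<\infty\}$. Standing assumptions (valid for $\epsilon,|\mu|$ small): $\mathcal T$ maps $\mathcal H_M$ into itself; the chain $(\eta_t)$ has an invariant probability measure $\Pi$, absolutely continuous w.r.t. $\Pi_0$ with bounded density; there is $\bar\mu\in(0,1)$ with $\|\mathcal T f\|_M\le\bar\mu\|f\|_M$ for all $f\in\widehat{\mathcal H}_M:=\{f\in\mathcal H_M:\int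 f\,d\Pi=0\}$. The dynamics and $\Pi$ are invariant under the global spin flip $\eta\mapsto-\eta$. Path space notation: $\widehat\Omega=\{\pm1\}^{\mathbb{Z}^d\times\mathbb{Z}_+}$; $\mathcal P_\Pi$ is the law of $(\eta_t)_{t\ge0}$ with $\eta_0\sim\Pi$; $\mathfrak M_{t_0}^{t_1}$ is the $\sigma$-algebra generated by $\eta_{t_0},\dots,\eta_{t_1}$, $\mathfrak M_t=\mathfrak M_t^t$. $\zeta_t:=\eta_t(0)$, $\widehat\zeta=(\zeta_t)_{t\ge0}\in\Omega_+:=\{\pm1\}^{\mathbb{Z}_+}$. Walsh functions: $\Psi_\gamma(\widehat\zeta)=\prod_{t\in\gamma}\zeta_t$ for finite $\gamma\subset\mathbb{Z}_+$, $\Psi_\emptyset=1$. $\mu_*:=M\sqrt{\bar\mu(1+2\bar\mu)}$. *)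

theory Defs
  imports "HOL-Probability.Probability"
begin

text \<open>Configurations: \<Omega> = functions Z^d \<Rightarrow> {-1,+1}, modelled as real-valued functions
  on the lattice int^'d (dimension d = CARD('d)).\<close>

type_synonym 'd config = "(int ^ 'd) \<Rightarrow> real"

definition Pi0 :: "'d::finite config measure" where
  "Pi0 = PiM UNIV (\<lambda>_. measure_pmf (pmf_of_set {-1::real, 1}))"

definition Phi :: "(int ^ 'd) set \<Rightarrow> 'd::finite config \<Rightarrow> real" where
  "Phi G eta = (\<Prod>x\<in>G. eta x)"

definition walsh_coef :: "('d::finite config \<Rightarrow> real) \<Rightarrow> (int ^ 'd) set \<Rightarrow> real" where
  "walsh_coef f G = (\<integral>eta. f eta * Phi G eta \<partial>Pi0)"

definition L2Pi0 :: "('d::finite config \<Rightarrow> real) set" where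
  "L2Pi0 = {f. f \<in> borel_measurable Pi0 \<and> integrable Pi0 (\<lambda>eta. (f eta)^2)}"

definition HM :: "real \<Rightarrow> ('d::finite config \<Rightarrow> real) set" where
  "HM M = {f. f \<in> L2Pi0 \<and>
      (\<lambda>G. \<bar>walsh_coef f G\<bar> * M ^ card G) summable_on {G. finite G}}"

definition normM :: "real \<Rightarrow> ('d::finite config \<Rightarrow> real) \<Rightarrow> real" where
  "normM M f = (\<Sum>\<^sub>\<infinity>G\<in>{G. finite G}. \<bar>walsh_coef f G\<bar> * M ^ card G)"

text \<open>Law of a single spin after one step: stays equal to a with probability 1-q,
  flips with probability q (symmetric 2x2 stochastic matrix with off-diagonal q).\<close>
definition spin_step :: "real \<Rightarrow> real \<Rightarrow> real pmf" where
  "spin_step q a = map_pmf (\<lambda>b. if b then - a else a) (bernoulli_pmf q)"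

text \<open>Joint law of the updated environment, in the frame of the walker before its step:
  independent spins, Q_1 at the walker's site 0 and Q_0 elsewhere.\<close>
definition env_step :: "real \<Rightarrow> real \<Rightarrow> 'd::finite config \<Rightarrow> 'd config measure" where
  "env_step q0 q1 eta =
     PiM UNIV (\<lambda>y. measure_pmf (spin_step (if y = 0 then q1 else q0) (eta y)))"

text \<open>Stochastic operator of the environment seen from the walk:
  (T f)(eta) = E[f(eta_{t+1}) | eta_t = eta]. The walker jumps by u with probability
  P0 u + eps * c u * eta 0, independently of the environment update, and
  eta_{t+1}(x) = xi_{t+1}(X_t + u + x).  S is a finite set containing the supports of P0, c.\<close>
definition Top :: "(int ^ 'd) set \<Rightarrow> ((int ^ 'd) \<Rightarrow> real) \<Rightarrow> ((int ^ 'd) \<Rightarrow> real) \<Rightarrow> real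
    \<Rightarrow> real \<Rightarrow> real \<Rightarrow> ('d::finite config \<Rightarrow> real) \<Rightarrow> 'd config \<Rightarrow> real" where
  "Top S P0 c eps q0 q1 f eta =
     (\<Sum>u\<in>S. (P0 u + eps * c u * eta 0) *
        (\<integral>xi. f (\<lambda>x. xi (u + x)) \<partial>env_step q0 q1 eta))"

text \<open>Finite-dimensional expectations of the Markov chain with one-step operator T:
  chain_exp T n F eta = E[F([eta_0, ..., eta_n]) | eta_0 = eta].\<close>
fun chain_exp :: "(('a \<Rightarrow> real) \<Rightarrow> 'a \<Rightarrow> real) \<Rightarrow> nat \<Rightarrow> ('a list \<Rightarrow> real) \<Rightarrow> 'a \<Rightarrow> real" where
  "chain_exp T 0 F eta = F [eta]"
| "chain_exp T (Suc n) F eta = T (\<lambda>eta'. chain_exp T n (\<lambda>xs. F (eta # xs)) eta') eta"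

text \<open>G_gamma(eta) = E[Psi_gamma | eta_{t_0} = eta]; by time-homogeneity this is the
  expectation of prod_{t in gamma} zeta_{t - t_0} for the chain started at eta.\<close>
definition G_gamma :: "(('d::finite config \<Rightarrow> real) \<Rightarrow> 'd config \<Rightarrow> real) \<Rightarrow> nat set
    \<Rightarrow> 'd config \<Rightarrow> real" where
  "G_gamma T gam eta =
     chain_exp T (Max gam - Min gam) (\<lambda>xs. \<Prod>t\<in>gam. (xs ! (t - Min gam)) 0) eta"

definition ip :: "real ^ 'd \<Rightarrow> int ^ 'd \<Rightarrow> real" where
  "ip l u = (\<Sum>i\<in>UNIV. l $ i * real_of_int (u $ i))"

definition p_tilde :: "((int ^ 'd::finite) \<Rightarrow> real) \<Rightarrow> real ^ 'd \<Rightarrow> complex" where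
  "p_tilde P0 l = (\<Sum>u\<in>{u. P0 u \<noteq> 0}. complex_of_real (P0 u) * cis (ip l u))"

definition inv_p_fourier :: "((int ^ 'd::finite) \<Rightarrow> real) \<Rightarrow> int ^ 'd \<Rightarrow> complex" where
  "inv_p_fourier P0 x =
     complex_of_real (1 / (2 * pi) ^ CARD('d)) *
     integral (cbox (\<chi> i. - pi) (\<chi> i. pi)) (\<lambda>l. cis (- ip l x) / p_tilde P0 l)"

end

theory Submission
  imports Defs
begin


abbreviation UU :: "real measure" where "UU \<equiv> measure_pmf (pmf_of_set {-1::real, 1})"

definition cube :: "'d::finite config set" where
  "cube = {eta. \<forall>x. eta x = 1 \<or> eta x = -1}"

lemma prob_UU: "prob_space UU" by (rule prob_space_measure_pmf)

interpretation Pi0P: product_prob_space "\<lambda>_::int^'d::finite. UU" UNIV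
  by unfold_locales

lemma prob_Pi0: "prob_space (Pi0 :: 'd::finite config measure)"
  unfolding Pi0_def by (rule Pi0P.P.prob_space_axioms)

lemma space_Pi0[simp]: "space (Pi0 :: 'd::finite config measure) = UNIV"
  unfolding Pi0_def by (simp add: space_PiM)

lemma set_pmf_UU: "set_pmf (pmf_of_set {-1::real, 1}) = {-1,1}"
  by (simp add: set_pmf_of_set)

lemma AE_cube: "AE eta in (Pi0 :: 'd::finite config measure). eta \<in> cube"
proof -
  have "\<And>x::int^'d. AE eta in Pi0. eta x = 1 \<or> eta x = -1"
  proof -
    fix x :: "int^'d"
    have "AE y in UU. y = 1 \<or> y = -1"
      by (rule AE_pmfI) (auto simp: set_pmf_UU)
    then show "AE eta in Pi0. eta x = 1 \<or> eta x = -1"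
      unfolding Pi0_def by (rule Pi0P.AE_component[rotated]) simp
  qed
  then have "AE eta in (Pi0 :: 'd::finite config measure). \<forall>x. eta x = 1 \<or> eta x = -1"
    by (subst AE_all_countable) auto
  then show ?thesis by (simp add: cube_def)
qed

lemma integral_UU: "(\<integral>y. f y \<partial>UU) = ((f 1 + f (-1)) / 2 :: real)"
  by (subst integral_pmf_of_set) (auto simp: add.commute)


lemma integrable_UU: "integrable UU (f :: real \<Rightarrow> real)"
  by (rule integrable_measure_pmf_finite) (simp add: set_pmf_UU)

lemma meas_UU: "f \<in> borel_measurable UU"
  by simp

lemma integral_Pi0_prod:
  fixes h :: "int^'d::finite \<Rightarrow> real \<Rightarrow> real"
  assumes J: "finite J"
  shows "(\<integral>eta. (\<Prod>x\<in>J. h x (eta x)) \<partial>(Pi0::'d config measure)) = (\<Prod>x\<in>J. \<integral>y. h x y \<partial>UU)"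
proof -
  have d: "distr (Pi0::'d config measure) (PiM J (\<lambda>_. UU)) (\<lambda>eta. restrict eta J) = PiM J (\<lambda>_. UU)"
    unfolding Pi0_def using J by (intro Pi0P.distr_PiM_restrict_finite) auto
  have m: "(\<lambda>\<omega>. \<Prod>x\<in>J. h x (\<omega> x)) \<in> borel_measurable (PiM J (\<lambda>_. UU))"
    apply (intro borel_measurable_prod)
    apply (rule measurable_compose[OF measurable_component_singleton])
     apply simp
    apply (simp add: measurable_count_space_eq1)
    done
  have "(\<integral>eta. (\<Prod>x\<in>J. h x (eta x)) \<partial>(Pi0::'d config measure)) =
     (\<integral>eta. (\<Prod>x\<in>J. h x (restrict eta J x)) \<partial>(Pi0::'d config measure))"
    by (intro Bochner_Integration.integral_cong) auto
  also have "\<dots> = (\<integral>\<omega>. (\<Prod>x\<in>J. h x (\<omega> x)) \<partial>(distr (Pi0::'d config measure) (PiM J (\<lambda>_. UU)) (\<lambda>eta. restrict eta J)))"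
    unfolding Pi0_def by (rule integral_distr[symmetric], rule measurable_restrict_subset, simp, rule m)
  also have "\<dots> = (\<Prod>x\<in>J. \<integral>y. h x y \<partial>UU)"
    unfolding d
    by (rule product_sigma_finite.product_integral_prod) (auto intro: J integrable_UU simp: product_sigma_finite_def prob_space_imp_sigma_finite prob_space_measure_pmf)
  finally show ?thesis .
qed


definition sd :: "'a set \<Rightarrow> 'a set \<Rightarrow> 'a set" where "sd A B = (A - B) \<union> (B - A)"

lemma sets_Pi0: "sets (Pi0 :: 'd::finite config measure) = sets (PiM (UNIV::(int^'d) set) (\<lambda>_. count_space (UNIV::real set)))"
  unfolding Pi0_def by (rule sets_PiM_cong) auto

lemma meas_coord[measurable]: "(\<lambda>eta. g (eta x) :: real) \<in> borel_measurable (Pi0 :: 'd::finite config measure)"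
  unfolding Pi0_def
  apply (rule measurable_compose[OF measurable_component_singleton])
   apply simp
  apply (simp add: measurable_count_space_eq1)
  done

lemma meas_Phi[measurable]: "Phi G \<in> borel_measurable (Pi0 :: 'd::finite config measure)"
  unfolding Phi_def by (intro borel_measurable_prod meas_coord)

lemma cube_sq: "eta \<in> cube \<Longrightarrow> eta x * eta x = 1"
  unfolding cube_def by (cases "eta x = 1") auto

lemma cube_abs: "eta \<in> cube \<Longrightarrow> \<bar>eta x\<bar> = 1"
  unfolding cube_def by (cases "eta x = 1") auto

lemma Phi_abs: "eta \<in> cube \<Longrightarrow> \<bar>Phi G eta\<bar> = 1"
  unfolding Phi_def by (simp add: abs_prod cube_abs)

lemma prod_sq_cube: "eta \<in> cube \<Longrightarrow> (\<Prod>x\<in>A. eta x) * (\<Prod>x\<in>A. eta x) = 1"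
proof -
  have "(\<Prod>x\<in>A. eta x) * (\<Prod>x\<in>A. eta x) = (\<Prod>x\<in>A. eta x * eta x)" by (rule prod.distrib[symmetric])
  also assume "eta \<in> cube"
  then have "(\<Prod>x\<in>A. eta x * eta x) = 1" by (simp add: cube_sq)
  finally show ?thesis .
qed

lemma Phi_mult: assumes "finite G" "finite H" "eta \<in> cube"
  shows "Phi G eta * Phi H eta = Phi (sd G H) eta"
proof -
  have G: "G = (G - H) \<union> (G \<inter> H)" and H: "H = (H - G) \<union> (G \<inter> H)" by auto
  have PG: "Phi G eta = (\<Prod>x\<in>G-H. eta x) * (\<Prod>x\<in>G\<inter>H. eta x)"
    unfolding Phi_def using assms by (subst G) (rule prod.union_disjoint, auto)
  have PH: "Phi H eta = (\<Prod>x\<in>H-G. eta x) * (\<Prod>x\<in>G\<inter>H. eta x)"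
    unfolding Phi_def using assms by (subst H) (rule prod.union_disjoint, auto)
  have PS: "Phi (sd G H) eta = (\<Prod>x\<in>G-H. eta x) * (\<Prod>x\<in>H-G. eta x)"
    unfolding Phi_def sd_def using assms by (subst prod.union_disjoint) auto
  show ?thesis unfolding PG PH PS using prod_sq_cube[OF assms(3), of "G \<inter> H"]
    by (simp add: algebra_simps)
qed

lemma Phi_0_mult: assumes "finite G" "eta \<in> cube"
  shows "eta 0 * Phi G eta = Phi (sd G {0}) eta"
  using Phi_mult[OF assms(1) _ assms(2), of "{0}"] by (simp add: Phi_def mult.commute)

lemma Phi_empty[simp]: "Phi {} eta = 1" by (simp add: Phi_def)

lemma integral_Phi: assumes "finite G"
  shows "(\<integral>eta. Phi G eta \<partial>(Pi0::'d::finite config measure)) = (if G = {} then 1 else 0)"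
proof -
  have "(\<integral>eta. Phi G eta \<partial>(Pi0::'d config measure)) = (\<Prod>x\<in>G. \<integral>y. y \<partial>UU)"
    unfolding Phi_def by (rule integral_Pi0_prod[OF assms])
  also have "\<dots> = (\<Prod>x\<in>G. 0)" by (simp add: integral_UU)
  finally show ?thesis using assms by (simp add: card_gt_0_iff)
qed

lemma sd_finite: "finite A \<Longrightarrow> finite B \<Longrightarrow> finite (sd A B)" by (simp add: sd_def)
lemma sd_empty_iff: "sd A B = {} \<longleftrightarrow> A = B" by (auto simp: sd_def)

lemma integral_Phi_mult: assumes "finite G" "finite H"
  shows "(\<integral>eta. Phi G eta * Phi H eta \<partial>(Pi0::'d::finite config measure)) = (if G = H then 1 else 0)"
proof -
  have "(\<integral>eta. Phi G eta * Phi H eta \<partial>(Pi0::'d config measure)) = (\<integral>eta. Phi (sd G H) eta \<partial>(Pi0::'d config measure))"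
    apply (rule integral_cong_AE)
      apply simp
     apply simp
    using AE_cube by (rule AE_mp) (simp add: Phi_mult assms)
  then show ?thesis by (simp add: integral_Phi sd_finite assms sd_empty_iff)
qed


lemma HM_meas: "f \<in> HM M \<Longrightarrow> f \<in> borel_measurable (Pi0 :: 'd::finite config measure)"
  by (simp add: HM_def L2Pi0_def)

lemma HM_sq: "f \<in> HM M \<Longrightarrow> integrable (Pi0 :: 'd::finite config measure) (\<lambda>eta. (f eta)^2)"
  by (simp add: HM_def L2Pi0_def)

lemma HM_summ: "f \<in> HM M \<Longrightarrow> (\<lambda>G. \<bar>walsh_coef f G\<bar> * M ^ card G) summable_on {G. finite G}"
  by (simp add: HM_def)

lemma fin_Pi0: "finite_measure (Pi0 :: 'd::finite config measure)"
  unfolding Pi0_def by (rule Pi0P.P.finite_measure_axioms)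

lemma HM_int: "f \<in> HM M \<Longrightarrow> integrable (Pi0 :: 'd::finite config measure) f"
  by (rule finite_measure.square_integrable_imp_integrable[OF fin_Pi0 HM_meas HM_sq])

lemma int_Phi_mult:
  assumes "integrable (Pi0 :: 'd::finite config measure) f"
  shows "integrable (Pi0 :: 'd config measure) (\<lambda>eta. f eta * Phi G eta)"
proof (rule Bochner_Integration.integrable_bound[OF assms])
  show "(\<lambda>eta. f eta * Phi G eta) \<in> borel_measurable Pi0"
    using borel_measurable_integrable[OF assms] by (intro borel_measurable_times meas_Phi)
  show "AE x in Pi0. norm (f x * Phi G x) \<le> norm (f x)"
    using AE_cube by (rule AE_mp) (auto simp: abs_mult Phi_abs)
qed

lemma int_Phi: "integrable (Pi0 :: 'd::finite config measure) (Phi G)"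
  using int_Phi_mult[of "\<lambda>_. 1" G] by (simp add: finite_measure.integrable_const[OF fin_Pi0])

lemma coef_AE:
  assumes "f \<in> borel_measurable (Pi0 :: 'd::finite config measure)" "g \<in> borel_measurable (Pi0 :: 'd config measure)"
    "AE eta in (Pi0 :: 'd config measure). f eta = g eta"
  shows "walsh_coef f G = walsh_coef g G"
  unfolding walsh_coef_def
proof (rule integral_cong_AE)
  show "(\<lambda>eta. f eta * Phi G eta) \<in> borel_measurable Pi0" using assms(1) by (intro borel_measurable_times meas_Phi)
  show "(\<lambda>eta. g eta * Phi G eta) \<in> borel_measurable Pi0" using assms(2) by (intro borel_measurable_times meas_Phi)
  show "AE x in Pi0. f x * Phi G x = g x * Phi G x" using assms(3) by (rule AE_mp) auto
qed

lemma coef_mult0: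
  assumes "f \<in> borel_measurable (Pi0 :: 'd::finite config measure)" "finite G"
  shows "walsh_coef (\<lambda>eta. eta 0 * f eta) G = walsh_coef f (sd G {0})"
  unfolding walsh_coef_def
proof (rule integral_cong_AE)
  show "(\<lambda>eta. eta 0 * f eta * Phi G eta) \<in> borel_measurable Pi0" using assms(1) by (intro borel_measurable_times meas_Phi meas_coord[where g="\<lambda>x. x"])
  show "(\<lambda>eta. f eta * Phi (sd G {0}) eta) \<in> borel_measurable Pi0" using assms(1) by (intro borel_measurable_times meas_Phi)
  show "AE x in Pi0. x 0 * f x * Phi G x = f x * Phi (sd G {0}) x"
    using AE_cube by (rule AE_mp) (use assms(2) in \<open>auto simp: Phi_0_mult[symmetric] algebra_simps\<close>)
qed

lemma coef_add_const:
  assumes "integrable (Pi0 :: 'd::finite config measure) f" "finite G"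
  shows "walsh_coef (\<lambda>eta. f eta + c) G = walsh_coef f G + c * (if G = {} then 1 else 0)"
proof -
  have "walsh_coef (\<lambda>eta. f eta + c) G = (\<integral>eta. f eta * Phi G eta + c * Phi G eta \<partial>Pi0)"
    unfolding walsh_coef_def by (simp add: algebra_simps)
  also have "\<dots> = walsh_coef f G + c * (\<integral>eta. Phi G eta \<partial>(Pi0 :: 'd config measure))"
    unfolding walsh_coef_def
    by (subst Bochner_Integration.integral_add) (auto intro!: int_Phi_mult assms int_Phi)
  finally show ?thesis using assms by (simp add: integral_Phi)
qed

lemma normM_nonneg: "0 \<le> M \<Longrightarrow> 0 \<le> normM M f"
  unfolding normM_def by (rule infsum_nonneg) simp

lemma coef_le_normM:
  assumes "f \<in> HM M" "0 \<le> M" "finite G"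
  shows "\<bar>walsh_coef f G\<bar> * M ^ card G \<le> normM M f"
proof -
  have "\<bar>walsh_coef f G\<bar> * M ^ card G = (\<Sum>\<^sub>\<infinity>H\<in>{G}. \<bar>walsh_coef f H\<bar> * M ^ card H)"
    by simp
  also have "\<dots> \<le> normM M f"
    unfolding normM_def
    by (rule infsum_mono2) (use assms HM_summ in auto)
  finally show ?thesis .
qed

lemma summable_single:
  "(\<lambda>G::'a set. if G = {} then (c::real) else 0) summable_on {G. finite G}"
  and infsum_single:
  "(\<Sum>\<^sub>\<infinity>G\<in>{G::'a set. finite G}. if G = {} then (c::real) else 0) = c"
proof -
  have "(\<Sum>\<^sub>\<infinity>G\<in>{G::'a set. finite G}. if G = {} then (c::real) else 0) = (\<Sum>\<^sub>\<infinity>G\<in>{{}::'a set}. if G = {} then (c::real) else 0)"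
    by (rule infsum_cong_neutral) auto
  then show "(\<Sum>\<^sub>\<infinity>G\<in>{G::'a set. finite G}. if G = {} then (c::real) else 0) = c" by simp
  have "(\<lambda>G::'a set. if G = {} then (c::real) else 0) summable_on {{}}" by simp
  then show "(\<lambda>G::'a set. if G = {} then (c::real) else 0) summable_on {G. finite G}"
    by (rule summable_on_cong_neutral[THEN iffD1, rotated -1]) auto
qed

lemma HM_add_const:
  assumes f: "f \<in> HM M" and M: "0 \<le> M"
  shows "(\<lambda>eta. f eta + c) \<in> HM M \<and> normM M (\<lambda>eta. f eta + c) \<le> normM M f + \<bar>c\<bar>"
proof -
  let ?a = "\<lambda>G. \<bar>walsh_coef f G\<bar> * M ^ card G"
  let ?e = "\<lambda>G::(int^'a) set. if G = {} then \<bar>c\<bar> else 0"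
  let ?b = "\<lambda>G. \<bar>walsh_coef (\<lambda>eta. f eta + c) G\<bar> * M ^ card G"
  have le: "?b G \<le> ?a G + ?e G" if "G \<in> {G. finite G}" for G
  proof -
    have "?b G = \<bar>walsh_coef f G + c * (if G = {} then 1 else 0)\<bar> * M ^ card G"
      using that by (simp add: coef_add_const HM_int[OF f])
    also have "\<dots> \<le> ?a G + ?e G"
      using M by (cases "G = {}") (auto simp: abs_triangle_ineq)
    finally show ?thesis .
  qed
  have sa: "?a summable_on {G. finite G}" using HM_summ[OF f] .
  have se: "?e summable_on {G. finite G}" by (rule summable_single)
  have sae: "(\<lambda>G. ?a G + ?e G) summable_on {G. finite G}" by (rule summable_on_add[OF sa se])
  have sb: "?b summable_on {G. finite G}"
    by (rule summable_on_comparison_test[OF sae le]) (use M in auto)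
  have "normM M (\<lambda>eta. f eta + c) \<le> (\<Sum>\<^sub>\<infinity>G\<in>{G. finite G}. ?a G + ?e G)"
    unfolding normM_def by (rule infsum_mono[OF sb sae le])
  also have "\<dots> = normM M f + \<bar>c\<bar>"
    unfolding normM_def by (simp add: infsum_add[OF sa se] infsum_single)
  finally have n: "normM M (\<lambda>eta. f eta + c) \<le> normM M f + \<bar>c\<bar>" .
  have meas: "(\<lambda>eta. f eta + c) \<in> borel_measurable Pi0" using HM_meas[OF f] by measurable
  have sq: "integrable Pi0 (\<lambda>eta. (f eta + c)^2)"
  proof -
    have "integrable Pi0 (\<lambda>eta. (f eta)^2 + 2 * c * f eta + c^2)"
      by (intro Bochner_Integration.integrable_add integrable_mult_right HM_sq[OF f] HM_int[OF f]
            finite_measure.integrable_const[OF fin_Pi0])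
    then show ?thesis by (simp add: power2_eq_square algebra_simps)
  qed
  show ?thesis using n meas sq sb by (simp add: HM_def L2Pi0_def)
qed


lemma sd_sd: "sd (sd G A) A = G" by (auto simp: sd_def)

lemma card_sd0: "finite G \<Longrightarrow> card G \<le> card (sd G {0}) + 1"
proof -
  assume "finite G"
  have "G \<subseteq> insert 0 (sd G {0})" by (auto simp: sd_def)
  then have "card G \<le> card (insert 0 (sd G {0}))"
    by (rule card_mono[rotated]) (simp add: sd_finite \<open>finite G\<close>)
  also have "\<dots> \<le> card (sd G {0}) + 1" by (simp add: card_insert_le_m1 card_insert_if)
  finally show ?thesis .
qed

lemma bij_sd0: "bij_betw (\<lambda>G. sd G {0}) {G::'a::zero set. finite G} {G. finite G}"
  by (rule bij_betwI[where g="\<lambda>G. sd G {0}"]) (auto simp: sd_finite sd_sd)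

lemma HM_mult0:
  assumes f: "f \<in> HM M" and M: "1 \<le> M"
  shows "(\<lambda>eta. eta 0 * f eta) \<in> HM M \<and> normM M (\<lambda>eta. eta 0 * f eta) \<le> M * normM M f"
proof -
  let ?a = "\<lambda>G. \<bar>walsh_coef f G\<bar> * M ^ card G"
  let ?b = "\<lambda>G. \<bar>walsh_coef (\<lambda>eta. eta 0 * f eta) G\<bar> * M ^ card G"
  let ?c = "\<lambda>G. M * ?a (sd G {0})"
  have le: "?b G \<le> ?c G" if "G \<in> {G. finite G}" for G
  proof -
    have "?b G = \<bar>walsh_coef f (sd G {0})\<bar> * M ^ card G"
      using that by (simp add: coef_mult0 HM_meas[OF f])
    also have "\<dots> \<le> \<bar>walsh_coef f (sd G {0})\<bar> * M ^ (card (sd G {0}) + 1)"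
      using M that card_sd0[of G] by (intro mult_left_mono power_increasing) auto
    finally show ?thesis by (simp add: algebra_simps)
  qed
  have sa: "(\<lambda>G. ?a (sd G {0})) summable_on {G. finite G}"
    using summable_on_reindex_bij_betw[OF bij_sd0, of ?a] HM_summ[OF f] by simp
  have sc: "?c summable_on {G. finite G}" using summable_on_cmult_right[OF sa] .
  have sb: "?b summable_on {G. finite G}"
    by (rule summable_on_comparison_test[OF sc le]) (use M in auto)
  have "normM M (\<lambda>eta. eta 0 * f eta) \<le> infsum ?c {G. finite G}"
    unfolding normM_def by (rule infsum_mono[OF sb sc le])
  also have "\<dots> = M * infsum (\<lambda>G. ?a (sd G {0})) {G. finite G}"
    by (rule infsum_cmult_right')
  also have "infsum (\<lambda>G. ?a (sd G {0})) {G. finite G} = normM M f"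
    unfolding normM_def by (rule infsum_reindex_bij_betw[OF bij_sd0])
  finally have n: "normM M (\<lambda>eta. eta 0 * f eta) \<le> M * normM M f" .
  have meas: "(\<lambda>eta. eta 0 * f eta) \<in> borel_measurable Pi0"
    using HM_meas[OF f] by (intro borel_measurable_times meas_coord[where g="\<lambda>x. x"])
  have sq: "integrable Pi0 (\<lambda>eta. (eta 0 * f eta)^2)"
  proof (rule integrable_cong_AE[THEN iffD1, OF _ _ _ HM_sq[OF f]])
    show "(\<lambda>eta. (eta 0 * f eta)^2) \<in> borel_measurable Pi0" using meas by measurable
    show "(\<lambda>eta. (f eta)^2) \<in> borel_measurable Pi0" using HM_meas[OF f] by measurable
    show "AE x in Pi0. (f x)\<^sup>2 = (x 0 * f x)\<^sup>2"
      using AE_cube by (rule AE_mp) (auto simp: power_mult_distrib power2_eq_square cube_sq)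
  qed
  show ?thesis using n meas sq sb by (simp add: HM_def L2Pi0_def)
qed

lemma HM_AE:
  assumes f: "f \<in> HM M" and g: "g \<in> borel_measurable Pi0" and ae: "AE eta in Pi0. f eta = g eta"
  shows "g \<in> HM M \<and> normM M g = normM M f"
proof -
  have c: "walsh_coef g G = walsh_coef f G" for G
    by (rule coef_AE[OF g HM_meas[OF f]]) (use ae in \<open>rule AE_mp\<close>, auto)
  have sq: "integrable Pi0 (\<lambda>eta. (g eta)^2)"
  proof (rule integrable_cong_AE[THEN iffD1, OF _ _ _ HM_sq[OF f]])
    show "(\<lambda>eta. (g eta)^2) \<in> borel_measurable Pi0" using g by measurable
    show "(\<lambda>eta. (f eta)^2) \<in> borel_measurable Pi0" using HM_meas[OF f] by measurable
    show "AE x in Pi0. (f x)\<^sup>2 = (g x)\<^sup>2" using ae by (rule AE_mp) auto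
  qed
  show ?thesis using f g sq by (simp add: HM_def L2Pi0_def normM_def c)
qed


lemma infinite_vec_int: "infinite (UNIV :: (int^'d::finite) set)"
proof
  assume fin: "finite (UNIV :: (int^'d) set)"
  have "inj (\<lambda>i::int. (\<chi> j::'d. i))"
    by (rule injI) (metis vec_lambda_beta)
  then have "finite (UNIV :: int set)"
    using finite_imageD[OF finite_subset[OF subset_UNIV fin]] by blast
  then show False by simp
qed

lemma infinite_finsets: "infinite {G::(int^'d::finite) set. finite G}"
proof
  assume fin: "finite {G::(int^'d) set. finite G}"
  have "(\<lambda>x. {x}) ` (UNIV :: (int^'d) set) \<subseteq> {G. finite G}" by auto
  then have "finite ((\<lambda>x. {x}) ` (UNIV :: (int^'d) set))" using fin finite_subset by blast
  then have "finite (UNIV :: (int^'d) set)" by (rule finite_imageD) (simp add: inj_on_def)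
  then show False using infinite_vec_int by blast
qed

lemma integral_const_Pi0: "(\<integral>eta. c \<partial>(Pi0::'d::finite config measure)) = (c::real)"
  unfolding Pi0_def by (simp add: Pi0P.P.prob_space)

lemma measure_Pi0_UNIV: "measure (Pi0::'d::finite config measure) UNIV = 1"
  using prob_space.prob_space[OF prob_Pi0] by simp

lemma indicator_emb:
  "finite J \<Longrightarrow> indicator (prod_emb UNIV (\<lambda>_::int^'d::finite. UU) J (PiE J X)) eta = (\<Prod>x\<in>J. indicator (X x) (eta x) :: real)"
  by (simp add: prod_emb_def space_PiM indicator_def PiE_iff prod.neutral_const split: if_splits)


lemma cyl_expand:
  fixes X :: "int^'d::finite \<Rightarrow> real set"
  assumes J: "finite J" and eta: "eta \<in> cube"
  shows "(\<Prod>x\<in>J. indicator (X x) (eta x) :: real) =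
    (\<Sum>B\<in>Pow J. ((\<Prod>x\<in>B. (indicator (X x) 1 - indicator (X x) (-1)) / 2) *
        (\<Prod>x\<in>J-B. (indicator (X x) 1 + indicator (X x) (-1)) / 2)) * Phi B eta)"
proof -
  have "(\<Prod>x\<in>J. indicator (X x) (eta x) :: real) =
     (\<Prod>x\<in>J. (indicator (X x) 1 - indicator (X x) (-1)) / 2 * eta x + (indicator (X x) 1 + indicator (X x) (-1)) / 2)"
  proof (rule prod.cong[OF refl])
    fix x assume "x \<in> J"
    from eta have "eta x = 1 \<or> eta x = -1" by (simp add: cube_def)
    then show "indicator (X x) (eta x) = (indicator (X x) 1 - indicator (X x) (-1)) / 2 * eta x + (indicator (X x) 1 + indicator (X x) (-1)) / 2"
      by (auto simp: field_simps)
  qed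
  also have "\<dots> = (\<Sum>B\<in>Pow J. (\<Prod>x\<in>B. (indicator (X x) 1 - indicator (X x) (-1)) / 2 * eta x) *
        (\<Prod>x\<in>J-B. (indicator (X x) 1 + indicator (X x) (-1)) / 2))"
    by (rule prod_add[OF J])
  also have "\<dots> = (\<Sum>B\<in>Pow J. ((\<Prod>x\<in>B. (indicator (X x) 1 - indicator (X x) (-1)) / 2) *
        (\<Prod>x\<in>J-B. (indicator (X x) 1 + indicator (X x) (-1)) / 2)) * Phi B eta)"
  proof (rule sum.cong[OF refl])
    fix B assume "B \<in> Pow J"
    show "(\<Prod>x\<in>B. (indicator (X x) 1 - indicator (X x) (-1)) / 2 * eta x) *
        (\<Prod>x\<in>J-B. (indicator (X x) 1 + indicator (X x) (-1)) / 2) = ((\<Prod>x\<in>B. (indicator (X x) 1 - indicator (X x) (-1)) / 2) *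
        (\<Prod>x\<in>J-B. (indicator (X x) 1 + indicator (X x) (-1)) / 2)) * Phi B eta"
      unfolding Phi_def prod.distrib by (simp only: mult_ac)
  qed
  finally show ?thesis .
qed

lemma orth_zero:
  fixes h :: "'d::finite config \<Rightarrow> real"
  assumes h: "integrable Pi0 h" and orth: "\<And>H. finite H \<Longrightarrow> (\<integral>eta. h eta * Phi H eta \<partial>Pi0) = 0"
  shows "AE eta in Pi0. h eta = 0"
proof -
  have hm: "h \<in> borel_measurable Pi0" using h by (rule borel_measurable_integrable)
  have cyl: "(\<integral>eta. h eta * indicator (prod_emb UNIV (\<lambda>_::int^'d. UU) J (PiE J X)) eta \<partial>Pi0) = 0"
    if J: "finite J" for J and X :: "int^'d \<Rightarrow> real set"
  proof -
    define c where "c B = ((\<Prod>x\<in>B. (indicator (X x) 1 - indicator (X x) (-1)) / 2) *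
        (\<Prod>x\<in>J-B. (indicator (X x) 1 + indicator (X x) (-1)) / 2) :: real)" for B
    have "(\<integral>eta. h eta * indicator (prod_emb UNIV (\<lambda>_::int^'d. UU) J (PiE J X)) eta \<partial>Pi0) =
        (\<integral>eta. (\<Sum>B\<in>Pow J. c B * (h eta * Phi B eta)) \<partial>Pi0)"
    proof (rule integral_cong_AE)
      show "(\<lambda>eta. h eta * indicator (prod_emb UNIV (\<lambda>_::int^'d. UU) J (PiE J X)) eta) \<in> borel_measurable Pi0"
        using hm by (simp add: indicator_emb[OF J])
      show "(\<lambda>eta. \<Sum>B\<in>Pow J. c B * (h eta * Phi B eta)) \<in> borel_measurable Pi0"
        using hm by (intro borel_measurable_sum borel_measurable_times meas_Phi borel_measurable_const)
      show "AE eta in Pi0. h eta * indicator (prod_emb UNIV (\<lambda>_::int^'d. UU) J (PiE J X)) eta = (\<Sum>B\<in>Pow J. c B * (h eta * Phi B eta))"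
        using AE_cube by (rule AE_mp)
          (auto simp: indicator_emb[OF J] cyl_expand[OF J] c_def sum_distrib_left algebra_simps)
    qed
    also have "\<dots> = (\<Sum>B\<in>Pow J. c B * (\<integral>eta. h eta * Phi B eta \<partial>Pi0))"
      by (subst Bochner_Integration.integral_sum) (auto intro!: int_Phi_mult h)
    also have "\<dots> = 0" using J by (auto intro!: sum.neutral simp: orth finite_subset)
    finally show ?thesis .
  qed
  define hp where "hp eta = ennreal (max 0 (h eta))" for eta
  define hn where "hn eta = ennreal (max 0 (- h eta))" for eta
  have intp: "integrable Pi0 (\<lambda>eta. max 0 (h eta))" using h by auto
  have intn: "integrable Pi0 (\<lambda>eta. max 0 (- h eta))" using h by auto
  have emb: "emeasure (density Pi0 hp) A = emeasure (density Pi0 hn) A"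
    if A: "A \<in> sets (Pi0 :: 'd config measure)" and
       eq: "(\<integral>eta. h eta * indicator A eta \<partial>Pi0) = 0" for A
  proof -
    have ip: "integrable Pi0 (\<lambda>eta. max 0 (h eta) * indicator A eta)"
      using intp A by (intro integrable_real_mult_indicator) auto
    have in': "integrable Pi0 (\<lambda>eta. max 0 (- h eta) * indicator A eta)"
      using intn A by (intro integrable_real_mult_indicator) auto
    have "emeasure (density Pi0 hp) A = (\<integral>\<^sup>+eta. ennreal (max 0 (h eta) * indicator A eta) \<partial>Pi0)"
      using A hm unfolding hp_def
      by (subst emeasure_density) (auto intro!: nn_integral_cong simp: indicator_def)
    also have "\<dots> = ennreal (\<integral>eta. max 0 (h eta) * indicator A eta \<partial>Pi0)"
      by (rule nn_integral_eq_integral[OF ip]) auto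
    also have "(\<integral>eta. max 0 (h eta) * indicator A eta \<partial>Pi0) = (\<integral>eta. max 0 (- h eta) * indicator A eta \<partial>Pi0)"
    proof -
      have "(\<integral>eta. max 0 (h eta) * indicator A eta \<partial>Pi0) - (\<integral>eta. max 0 (- h eta) * indicator A eta \<partial>Pi0)
          = (\<integral>eta. h eta * indicator A eta \<partial>Pi0)"
        by (subst Bochner_Integration.integral_diff[OF ip in', symmetric])
          (rule Bochner_Integration.integral_cong, auto simp: max_def)
      then show ?thesis using eq by simp
    qed
    also have "ennreal \<dots> = (\<integral>\<^sup>+eta. ennreal (max 0 (- h eta) * indicator A eta) \<partial>Pi0)"
      by (rule nn_integral_eq_integral[OF in', symmetric]) auto
    also have "\<dots> = emeasure (density Pi0 hn) A"
      using A hm unfolding hn_def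
      by (subst emeasure_density) (auto intro!: nn_integral_cong simp: indicator_def)
    finally show ?thesis .
  qed
  have "density Pi0 hp = density Pi0 hn"
  proof (rule measure_eqI_PiM_infinite[where I=UNIV and M="\<lambda>_. UU"])
    show "sets (density Pi0 hp) = sets (PiM UNIV (\<lambda>_::int^'d. UU))" by (simp add: Pi0_def)
    show "sets (density Pi0 hn) = sets (PiM UNIV (\<lambda>_::int^'d. UU))" by (simp add: Pi0_def)
    fix A :: "int^'d \<Rightarrow> real set" and J :: "(int^'d) set"
    assume J: "finite J" "J \<subseteq> UNIV" "\<And>i. i \<in> J \<Longrightarrow> A i \<in> sets UU"
    show "emeasure (density Pi0 hp) (prod_emb UNIV (\<lambda>_. UU) J (Pi\<^sub>E J A)) = emeasure (density Pi0 hn) (prod_emb UNIV (\<lambda>_. UU) J (Pi\<^sub>E J A))"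
    proof (rule emb[OF _ cyl[OF J(1)]])
      show "prod_emb UNIV (\<lambda>_. UU) J (Pi\<^sub>E J A) \<in> sets (Pi0::'d config measure)"
        unfolding Pi0_def using J by (intro sets_PiM_I) auto
    qed
  next
    have "emeasure (density Pi0 hp) (space (density Pi0 hp)) = (\<integral>\<^sup>+eta. hp eta \<partial>Pi0)"
      unfolding hp_def using hm sets.top[of "Pi0::'d config measure"]
      by (subst emeasure_density) (auto intro!: nn_integral_cong)
    also have "\<dots> = ennreal (\<integral>eta. max 0 (h eta) \<partial>Pi0)"
      unfolding hp_def by (rule nn_integral_eq_integral[OF intp]) auto
    finally have "emeasure (density Pi0 hp) (space (density Pi0 hp)) = ennreal (\<integral>eta. max 0 (h eta) \<partial>Pi0)" .
    then show "finite_measure (density Pi0 hp)"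
      by (intro finite_measureI) auto
  qed
  then have "AE eta in Pi0. hp eta = hn eta"
    using sigma_finite_measure.density_unique_iff[of Pi0 hp hn] hm
    unfolding hp_def hn_def using prob_Pi0 prob_space_imp_sigma_finite by auto
  then show ?thesis
    by (rule AE_mp) (auto simp: hp_def hn_def max_def split: if_splits)
qed


lemma HM_bound:
  fixes f :: "'d::finite config \<Rightarrow> real"
  assumes f: "f \<in> HM M" and M: "1 \<le> M"
  shows "AE eta in Pi0. \<bar>f eta\<bar> \<le> normM M f"
proof -
  define A where "A = {G::(int^'d) set. finite G}"
  define e where "e = from_nat_into A"
  have bij: "bij_betw e UNIV A"
    unfolding e_def A_def by (rule bij_betw_from_nat_into) (auto simp: countable_Collect_finite infinite_finsets)
  have efin: "finite (e n)" for n using bij unfolding bij_betw_def A_def by auto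
  define a where "a n = walsh_coef f (e n)" for n
  define b where "b n = \<bar>a n\<bar> * M ^ card (e n)" for n
  have sb': "b summable_on UNIV"
    unfolding b_def a_def using summable_on_reindex_bij_betw[OF bij, of "\<lambda>G. \<bar>walsh_coef f G\<bar> * M ^ card G"] HM_summ[OF f]
    by (simp add: A_def)
  have ib: "infsum b UNIV = normM M f"
    unfolding b_def a_def normM_def using infsum_reindex_bij_betw[OF bij, of "\<lambda>G. \<bar>walsh_coef f G\<bar> * M ^ card G"]
    by (simp add: A_def)
  have bsums: "b sums normM M f"
    using has_sum_imp_sums[of b "infsum b UNIV"] sb' ib by (simp add: summable_iff_has_sum_infsum)
  have ab: "\<bar>a n\<bar> \<le> b n" for n
  proof -
    have "\<bar>a n\<bar> * 1 \<le> \<bar>a n\<bar> * M ^ card (e n)" using M by (intro mult_left_mono one_le_power) auto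
    then show ?thesis by (simp add: b_def)
  qed
  have sa: "summable (\<lambda>n. \<bar>a n\<bar>)"
    by (rule summable_comparison_test[of _ b]) (use ab bsums sums_summable in auto)
  have suma: "(\<Sum>n. \<bar>a n\<bar>) \<le> normM M f"
    using suminf_le[of "\<lambda>n. \<bar>a n\<bar>" b, OF ab sa] bsums sums_summable sums_unique by fastforce
  define g where "g eta = (\<Sum>n. a n * Phi (e n) eta)" for eta
  have gm: "g \<in> borel_measurable Pi0"
    unfolding g_def by (intro borel_measurable_suminf borel_measurable_times meas_Phi borel_measurable_const)
  have sg: "summable (\<lambda>n. norm (a n * Phi (e n) eta))" if "eta \<in> cube" for eta
    using sa that by (simp add: abs_mult Phi_abs)
  have gb: "\<bar>g eta\<bar> \<le> normM M f" if "eta \<in> cube" for eta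
  proof -
    have "\<bar>g eta\<bar> \<le> (\<Sum>n. norm (a n * Phi (e n) eta))"
      unfolding g_def using summable_norm[OF sg[OF that]] by simp
    also have "\<dots> = (\<Sum>n. \<bar>a n\<bar>)" using that by (simp add: abs_mult Phi_abs)
    finally show ?thesis using suma by simp
  qed
  have gint: "integrable Pi0 g"
    by (rule finite_measure.integrable_const_bound[OF fin_Pi0 _ gm, where B="normM M f"])
      (use AE_cube in \<open>rule AE_mp\<close>, auto intro: gb)
  have gcoef: "(\<integral>eta. g eta * Phi H eta \<partial>Pi0) = walsh_coef f H" if H: "finite H" for H
  proof -
    define F where "F n eta = a n * Phi (e n) eta * Phi H eta" for n eta
    have Fint: "integrable Pi0 (F n)" for n
      unfolding F_def by (intro int_Phi_mult integrable_mult_right int_Phi)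
    have Fnorm: "(\<integral>eta. norm (F n eta) \<partial>Pi0) = \<bar>a n\<bar>" for n
    proof -
      have "(\<integral>eta. norm (F n eta) \<partial>Pi0) = (\<integral>eta. \<bar>a n\<bar> \<partial>(Pi0::'d config measure))"
        by (rule integral_cong_AE) (auto simp: F_def intro!: borel_measurable_abs borel_measurable_times meas_Phi
            intro: AE_mp[OF AE_cube] simp: abs_mult Phi_abs)
      then show ?thesis by (simp add: measure_Pi0_UNIV)
    qed
    have AEs: "AE eta in Pi0. summable (\<lambda>n. norm (F n eta))"
      using AE_cube by (rule AE_mp) (auto simp: F_def abs_mult Phi_abs sa)
    have sI: "summable (\<lambda>n. \<integral>eta. norm (F n eta) \<partial>Pi0)" unfolding Fnorm by (rule sa)
    have "(\<integral>eta. g eta * Phi H eta \<partial>Pi0) = (\<integral>eta. (\<Sum>n. F n eta) \<partial>Pi0)"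
    proof (rule integral_cong_AE)
      show "(\<lambda>eta. g eta * Phi H eta) \<in> borel_measurable Pi0" using gm by (intro borel_measurable_times meas_Phi)
      show "(\<lambda>eta. \<Sum>n. F n eta) \<in> borel_measurable Pi0" using Fint by (intro borel_measurable_suminf) auto
      show "AE eta in Pi0. g eta * Phi H eta = (\<Sum>n. F n eta)"
        using AE_cube by (rule AE_mp) (auto simp: g_def F_def suminf_mult2[OF summable_norm_cancel[OF sg]])
    qed
    also have "\<dots> = (\<Sum>n. \<integral>eta. F n eta \<partial>Pi0)"
      by (rule integral_suminf[OF Fint AEs sI])
    also have "\<dots> = (\<Sum>n. if n = the_inv_into UNIV e H then a n else 0)"
    proof (rule suminf_cong)
      fix n
      have "(\<integral>eta. F n eta \<partial>Pi0) = a n * (\<integral>eta. Phi (e n) eta * Phi H eta \<partial>Pi0)"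
        unfolding F_def by (simp add: mult.assoc)
      also have "\<dots> = a n * (if e n = H then 1 else 0)" by (simp add: integral_Phi_mult efin H)
      also have "(e n = H) = (n = the_inv_into UNIV e H)"
        using bij H unfolding A_def bij_betw_def
        by (auto simp: the_inv_into_f_f f_the_inv_into_f)
      finally show "(\<integral>eta. F n eta \<partial>Pi0) = (if n = the_inv_into UNIV e H then a n else 0)" by simp
    qed
    also have "\<dots> = a (the_inv_into UNIV e H)" using sums_single[of _ a] sums_unique by metis
    also have "\<dots> = walsh_coef f H"
      using bij H unfolding a_def A_def bij_betw_def by (auto simp: f_the_inv_into_f)
    finally show ?thesis .
  qed
  have hz: "AE eta in Pi0. f eta - g eta = 0"
  proof (rule orth_zero)
    show "integrable Pi0 (\<lambda>eta. f eta - g eta)" using HM_int[OF f] gint by auto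
    fix H :: "(int^'d) set" assume H: "finite H"
    have "(\<integral>eta. (f eta - g eta) * Phi H eta \<partial>Pi0) = (\<integral>eta. f eta * Phi H eta - g eta * Phi H eta \<partial>Pi0)"
      by (simp add: algebra_simps)
    also have "\<dots> = walsh_coef f H - (\<integral>eta. g eta * Phi H eta \<partial>Pi0)"
      unfolding walsh_coef_def
      by (rule Bochner_Integration.integral_diff) (auto intro!: int_Phi_mult HM_int[OF f] gint)
    finally show "(\<integral>eta. (f eta - g eta) * Phi H eta \<partial>Pi0) = 0" by (simp add: gcoef H)
  qed
  show ?thesis
    using hz AE_cube by eventually_elim (use gb in auto)
qed


lemma space_PiM_pmf[simp]: "space (PiM UNIV (\<lambda>i. measure_pmf (p i))) = UNIV"
  by (simp add: space_PiM)

lemma prob_PiM_pmf: "prob_space (PiM UNIV (\<lambda>i. measure_pmf (p i)))"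
  by (rule prob_space_PiM) (simp add: prob_space_measure_pmf)

lemma meas_PiM_pmf_map:
  "(\<lambda>\<omega> i. g i (\<omega> i)) \<in> measurable (PiM UNIV (\<lambda>i. measure_pmf (p i))) (PiM UNIV (\<lambda>i. measure_pmf (q i)))"
  by (rule measurable_PiM_single') (auto intro!: measurable_compose[OF measurable_component_singleton] simp: measurable_count_space_eq1)

lemma emb_preimage:
  "(\<lambda>\<omega> i. g i (\<omega> i)) -` prod_emb UNIV (\<lambda>i. measure_pmf (q i)) J (PiE J A) \<inter> space (PiM UNIV (\<lambda>i. measure_pmf (p i)))
    = prod_emb UNIV (\<lambda>i. measure_pmf (p i)) J (PiE J (\<lambda>i. g i -` A i))"
  by (auto simp: prod_emb_def PiE_iff)

lemma emb_preimage':
  "(\<lambda>\<omega> i. g i (\<omega> i)) -` prod_emb UNIV (\<lambda>i. measure_pmf (q i)) J (PiE J A)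
    = prod_emb UNIV (\<lambda>i. measure_pmf (p i)) J (PiE J (\<lambda>i. g i -` A i))"
  by (auto simp: prod_emb_def PiE_iff)

lemma PiM_map_pmf:
  fixes p :: "'i::countable \<Rightarrow> 'a pmf" and g :: "'i \<Rightarrow> 'a \<Rightarrow> 'b"
  shows "distr (PiM UNIV (\<lambda>i. measure_pmf (p i))) (PiM UNIV (\<lambda>i. measure_pmf (map_pmf (g i) (p i)))) (\<lambda>\<omega> i. g i (\<omega> i))
     = PiM UNIV (\<lambda>i. measure_pmf (map_pmf (g i) (p i)))"
proof (rule measure_eqI_PiM_infinite[where I=UNIV and M="\<lambda>i. measure_pmf (map_pmf (g i) (p i))"])
  show "sets (distr (PiM UNIV (\<lambda>i. measure_pmf (p i))) (PiM UNIV (\<lambda>i. measure_pmf (map_pmf (g i) (p i)))) (\<lambda>\<omega> i. g i (\<omega> i))) = sets (PiM UNIV (\<lambda>i. measure_pmf (map_pmf (g i) (p i))))"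
    by simp
  show "sets (PiM UNIV (\<lambda>i. measure_pmf (map_pmf (g i) (p i)))) = sets (PiM UNIV (\<lambda>i. measure_pmf (map_pmf (g i) (p i))))" ..
  fix A J assume J: "finite J" "J \<subseteq> (UNIV::'i set)" and A: "\<And>i. i \<in> J \<Longrightarrow> A i \<in> sets (measure_pmf (map_pmf (g i) (p i)))"
  have "emeasure (distr (PiM UNIV (\<lambda>i. measure_pmf (p i))) (PiM UNIV (\<lambda>i. measure_pmf (map_pmf (g i) (p i)))) (\<lambda>\<omega> i. g i (\<omega> i))) (prod_emb UNIV (\<lambda>i. measure_pmf (map_pmf (g i) (p i))) J (PiE J A))
      = emeasure (PiM UNIV (\<lambda>i. measure_pmf (p i))) (prod_emb UNIV (\<lambda>i. measure_pmf (p i)) J (PiE J (\<lambda>i. g i -` A i)))"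
    by (subst emeasure_distr) (auto simp: meas_PiM_pmf_map[of g p "\<lambda>i. map_pmf (g i) (p i)"] emb_preimage'[where q="\<lambda>i. map_pmf (g i) (p i)" and p=p] intro!: sets_PiM_I J)
  also have "\<dots> = (\<Prod>i\<in>J. emeasure (measure_pmf (p i)) (g i -` A i))"
    using J by (intro emeasure_PiM_emb) (auto simp: prob_space_measure_pmf)
  also have "\<dots> = (\<Prod>i\<in>J. emeasure (measure_pmf (map_pmf (g i) (p i))) (A i))"
    by (simp add: emeasure_map_pmf)
  also have "\<dots> = emeasure (PiM UNIV (\<lambda>i. measure_pmf (map_pmf (g i) (p i)))) (prod_emb UNIV (\<lambda>i. measure_pmf (map_pmf (g i) (p i))) J (PiE J A))"
    using J by (intro emeasure_PiM_emb[symmetric]) (auto simp: prob_space_measure_pmf)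
  finally show "emeasure (distr (PiM UNIV (\<lambda>i. measure_pmf (p i))) (PiM UNIV (\<lambda>i. measure_pmf (map_pmf (g i) (p i)))) (\<lambda>\<omega> i. g i (\<omega> i))) (prod_emb UNIV (\<lambda>i. measure_pmf (map_pmf (g i) (p i))) J (PiE J A)) = emeasure (PiM UNIV (\<lambda>i. measure_pmf (map_pmf (g i) (p i)))) (prod_emb UNIV (\<lambda>i. measure_pmf (map_pmf (g i) (p i))) J (PiE J A))" .
next
  show "finite_measure (distr (PiM UNIV (\<lambda>i. measure_pmf (p i))) (PiM UNIV (\<lambda>i. measure_pmf (map_pmf (g i) (p i)))) (\<lambda>\<omega> i. g i (\<omega> i)))"
    using prob_space.prob_space_distr[OF prob_PiM_pmf meas_PiM_pmf_map[of g p "\<lambda>i. map_pmf (g i) (p i)"]] by (simp add: prob_space_def)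
qed


definition qq :: "real \<Rightarrow> real \<Rightarrow> int^'d::finite \<Rightarrow> real" where
  "qq q0 q1 y = (if y = 0 then q1 else q0)"
definition Bern :: "real \<Rightarrow> real \<Rightarrow> (int^'d::finite \<Rightarrow> bool) measure" where
  "Bern q0 q1 = PiM UNIV (\<lambda>y. measure_pmf (bernoulli_pmf (qq q0 q1 y)))"
definition flip :: "'d::finite config \<Rightarrow> (int^'d \<Rightarrow> bool) \<Rightarrow> 'd config" where
  "flip eta \<omega> = (\<lambda>y. if \<omega> y then - eta y else eta y)"
definition sh :: "int^'d::finite \<Rightarrow> 'd config \<Rightarrow> 'd config" where
  "sh u \<xi> = (\<lambda>x. \<xi> (u + x))"
definition Iu :: "real \<Rightarrow> real \<Rightarrow> int^'d::finite \<Rightarrow> ('d config \<Rightarrow> real) \<Rightarrow> 'd config \<Rightarrow> real" where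
  "Iu q0 q1 u f eta = (\<integral>\<omega>. f (sh u (flip eta \<omega>)) \<partial>Bern q0 q1)"

lemma prob_Bern: "prob_space (Bern q0 q1)"
  unfolding Bern_def by (rule prob_PiM_pmf)

lemma env_step_alt: "env_step q0 q1 eta = PiM UNIV (\<lambda>y. measure_pmf (spin_step (qq q0 q1 y) (eta y)))"
  unfolding env_step_def qq_def ..

lemma env_rep: "env_step q0 q1 eta = distr (Bern q0 q1) (env_step q0 q1 eta) (flip eta)"
proof -
  have "distr (Bern q0 q1) (env_step q0 q1 eta) (\<lambda>\<omega> y. (\<lambda>b. if b then - eta y else eta y) (\<omega> y)) = env_step q0 q1 eta"
    unfolding Bern_def env_step_alt spin_step_def
    by (rule PiM_map_pmf[where p="\<lambda>y. bernoulli_pmf (qq q0 q1 y)" and g="\<lambda>y b. if b then - eta y else eta y"])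
  then show ?thesis unfolding flip_def[abs_def] by (rule sym)
qed

lemma sets_env: "sets (env_step q0 q1 eta) = sets (Pi0 :: 'd::finite config measure)"
  unfolding env_step_alt Pi0_def by (rule sets_PiM_cong) auto

lemma meas_reindex_map:
  "(\<lambda>\<omega> x. g x (\<omega> (\<sigma> x))) \<in> measurable (PiM UNIV (\<lambda>i. measure_pmf (p i))) (PiM UNIV (\<lambda>i. measure_pmf (q i)))"
  by (rule measurable_PiM_single') (auto intro!: measurable_compose[OF measurable_component_singleton] simp: measurable_count_space_eq1)

lemma meas_sh_flip: "(\<lambda>\<omega>. sh u (flip eta \<omega>)) \<in> measurable (Bern q0 q1) (Pi0 :: 'd::finite config measure)"
proof -
  have "(\<lambda>\<omega> x. (\<lambda>x b. if b then - eta (u + x) else eta (u + x)) x (\<omega> ((\<lambda>x. u + x) x))) \<in> measurable (Bern q0 q1) (Pi0 :: 'd config measure)"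
    unfolding Bern_def Pi0_def by (rule meas_reindex_map)
  then show ?thesis by (simp add: sh_def flip_def)
qed

lemma meas_sh: "sh u \<in> measurable (Pi0 :: 'd::finite config measure) (Pi0 :: 'd config measure)"
proof -
  have "(\<lambda>\<omega> x. (\<lambda>x b. b) x (\<omega> ((\<lambda>x. u + x) x))) \<in> measurable (Pi0 :: 'd config measure) (Pi0 :: 'd config measure)"
    unfolding Pi0_def by (rule meas_reindex_map)
  then show ?thesis by (simp add: sh_def[abs_def])
qed

lemma meas_comp_sh_flip: "f \<in> borel_measurable (Pi0 :: 'd::finite config measure) \<Longrightarrow>
   (\<lambda>\<omega>. f (sh u (flip eta \<omega>))) \<in> borel_measurable (Bern q0 q1)"
  using measurable_compose[OF meas_sh_flip] by blast

lemma int_env: assumes f: "f \<in> borel_measurable (Pi0 :: 'd::finite config measure)"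
  shows "(\<integral>\<xi>. f (sh u \<xi>) \<partial>env_step q0 q1 eta) = Iu q0 q1 u f eta"
proof -
  have m1: "flip eta \<in> measurable (Bern q0 q1) (env_step q0 q1 eta)"
  proof -
    have "(\<lambda>\<omega> y. (\<lambda>y b. if b then - eta y else eta y) y (\<omega> ((\<lambda>y. y) y))) \<in> measurable (Bern q0 q1) (env_step q0 q1 eta)"
      unfolding Bern_def env_step_alt by (rule meas_reindex_map)
    then show ?thesis by (simp add: flip_def[abs_def])
  qed
  have m2: "(\<lambda>\<xi>. f (sh u \<xi>)) \<in> borel_measurable (env_step q0 q1 eta)"
    using measurable_compose[OF meas_sh f] by (simp add: measurable_cong_sets[OF sets_env refl])
  have "(\<integral>\<xi>. f (sh u \<xi>) \<partial>env_step q0 q1 eta) = (\<integral>\<xi>. f (sh u \<xi>) \<partial>distr (Bern q0 q1) (env_step q0 q1 eta) (flip eta))"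
    by (subst env_rep) (rule refl)
  also have "\<dots> = Iu q0 q1 u f eta"
    unfolding Iu_def by (rule integral_distr[OF m1 m2])
  finally show ?thesis .
qed

lemma Top_rep: "f \<in> borel_measurable (Pi0 :: 'd::finite config measure) \<Longrightarrow>
   Top S P0 c eps q0 q1 f eta = (\<Sum>u\<in>S. (P0 u + eps * c u * eta 0) * Iu q0 q1 u f eta)"
  unfolding Top_def by (simp add: int_env[unfolded sh_def])

lemma flip_cube: "eta \<in> cube \<Longrightarrow> flip eta \<omega> \<in> cube"
  by (auto simp: cube_def flip_def)

lemma sh_cube: "\<xi> \<in> cube \<Longrightarrow> sh u \<xi> \<in> cube"
  by (auto simp: cube_def sh_def)

lemma Iu_bound:
  assumes f: "f \<in> borel_measurable (Pi0 :: 'd::finite config measure)" and K: "\<And>\<xi>. \<xi> \<in> cube \<Longrightarrow> \<bar>f \<xi>\<bar> \<le> K"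
    and eta: "eta \<in> cube"
  shows "integrable (Bern q0 q1) (\<lambda>\<omega>. f (sh u (flip eta \<omega>)))" "\<bar>Iu q0 q1 u f eta\<bar> \<le> K"
proof -
  interpret B: prob_space "Bern q0 q1" by (rule prob_Bern)
  show i: "integrable (Bern q0 q1) (\<lambda>\<omega>. f (sh u (flip eta \<omega>)))"
    by (rule B.integrable_const_bound[where B=K]) (auto intro!: meas_comp_sh_flip f K sh_cube flip_cube eta)
  have "\<bar>Iu q0 q1 u f eta\<bar> \<le> (\<integral>\<omega>. \<bar>f (sh u (flip eta \<omega>))\<bar> \<partial>Bern q0 q1)"
    unfolding Iu_def by (rule integral_abs_bound)
  also have "\<dots> \<le> (\<integral>\<omega>. K \<partial>(Bern q0 q1 :: (int^'d \<Rightarrow> bool) measure))"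
    by (intro Bochner_Integration.integral_mono_AE) (auto intro!: K sh_cube flip_cube eta i)
  finally show "\<bar>Iu q0 q1 u f eta\<bar> \<le> K" by (simp add: B.prob_space)
qed

lemma Iu_add_const:
  assumes f: "f \<in> borel_measurable (Pi0 :: 'd::finite config measure)" and K: "\<And>\<xi>. \<xi> \<in> cube \<Longrightarrow> \<bar>f \<xi>\<bar> \<le> K"
    and eta: "eta \<in> cube"
  shows "Iu q0 q1 u (\<lambda>\<xi>. f \<xi> + a) eta = Iu q0 q1 u f eta + a"
proof -
  interpret B: prob_space "Bern q0 q1" by (rule prob_Bern)
  show ?thesis
    unfolding Iu_def using Iu_bound(1)[OF f K eta, of q0 q1 u]
    by (subst Bochner_Integration.integral_add) (auto simp: B.prob_space)
qed

lemma Iu_mult: "Iu q0 q1 u (\<lambda>\<xi>. a * f \<xi>) eta = a * Iu q0 q1 u f eta"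
  unfolding Iu_def by simp

lemma Iu_diff:
  assumes f: "f \<in> borel_measurable (Pi0 :: 'd::finite config measure)" and K: "\<And>\<xi>. \<xi> \<in> cube \<Longrightarrow> \<bar>f \<xi>\<bar> \<le> K"
    and g: "g \<in> borel_measurable (Pi0 :: 'd::finite config measure)" and K': "\<And>\<xi>. \<xi> \<in> cube \<Longrightarrow> \<bar>g \<xi>\<bar> \<le> K'"
    and eta: "eta \<in> cube"
  shows "Iu q0 q1 u (\<lambda>\<xi>. f \<xi> - g \<xi>) eta = Iu q0 q1 u f eta - Iu q0 q1 u g eta"
  unfolding Iu_def using Iu_bound(1)[OF f K eta, of q0 q1 u] Iu_bound(1)[OF g K' eta, of q0 q1 u]
  by (subst Bochner_Integration.integral_diff) auto


lemma PiM_map_pmf_reindex: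
  fixes p :: "'i::countable \<Rightarrow> 'a pmf" and g :: "'i \<Rightarrow> 'a \<Rightarrow> 'b" and \<sigma> :: "'i \<Rightarrow> 'i"
  assumes bij: "bij \<sigma>"
  shows "distr (PiM UNIV (\<lambda>i. measure_pmf (p i))) (PiM UNIV (\<lambda>i. measure_pmf (map_pmf (g i) (p (\<sigma> i))))) (\<lambda>\<omega> i. g i (\<omega> (\<sigma> i)))
     = PiM UNIV (\<lambda>i. measure_pmf (map_pmf (g i) (p (\<sigma> i))))"
proof (rule measure_eqI_PiM_infinite[where I=UNIV and M="\<lambda>i. measure_pmf (map_pmf (g i) (p (\<sigma> i)))"])
  show "sets (distr (PiM UNIV (\<lambda>i. measure_pmf (p i))) (PiM UNIV (\<lambda>i. measure_pmf (map_pmf (g i) (p (\<sigma> i))))) (\<lambda>\<omega> i. g i (\<omega> (\<sigma> i)))) = sets (PiM UNIV (\<lambda>i. measure_pmf (map_pmf (g i) (p (\<sigma> i)))))"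
    by simp
  show "sets (PiM UNIV (\<lambda>i. measure_pmf (map_pmf (g i) (p (\<sigma> i))))) = sets (PiM UNIV (\<lambda>i. measure_pmf (map_pmf (g i) (p (\<sigma> i)))))" ..
  fix A J assume J: "finite J" "J \<subseteq> (UNIV::'i set)" and A: "\<And>i. i \<in> J \<Longrightarrow> A i \<in> sets (measure_pmf (map_pmf (g i) (p (\<sigma> i))))"
  define \<tau> where "\<tau> = inv \<sigma>"
  have st: "\<sigma> (\<tau> j) = j" for j using bij unfolding \<tau>_def by (simp add: bij_is_surj surj_f_inv_f)
  have ts: "\<tau> (\<sigma> i) = i" for i using bij unfolding \<tau>_def by (simp add: bij_is_inj inv_f_f)
  have pre: "(\<lambda>\<omega> i. g i (\<omega> (\<sigma> i))) -` prod_emb UNIV (\<lambda>i. measure_pmf (map_pmf (g i) (p (\<sigma> i)))) J (PiE J A)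
     = prod_emb UNIV (\<lambda>i. measure_pmf (p i)) (\<sigma> ` J) (PiE (\<sigma> ` J) (\<lambda>j. g (\<tau> j) -` A (\<tau> j)))"
    by (auto simp: prod_emb_def PiE_iff ts st)
  have m: "(\<lambda>\<omega> i. g i (\<omega> (\<sigma> i))) \<in> measurable (PiM UNIV (\<lambda>i. measure_pmf (p i))) (PiM UNIV (\<lambda>i. measure_pmf (map_pmf (g i) (p (\<sigma> i)))))"
    by (rule meas_reindex_map)
  have "emeasure (distr (PiM UNIV (\<lambda>i. measure_pmf (p i))) (PiM UNIV (\<lambda>i. measure_pmf (map_pmf (g i) (p (\<sigma> i))))) (\<lambda>\<omega> i. g i (\<omega> (\<sigma> i)))) (prod_emb UNIV (\<lambda>i. measure_pmf (map_pmf (g i) (p (\<sigma> i)))) J (PiE J A))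
      = emeasure (PiM UNIV (\<lambda>i. measure_pmf (p i))) (prod_emb UNIV (\<lambda>i. measure_pmf (p i)) (\<sigma> ` J) (PiE (\<sigma> ` J) (\<lambda>j. g (\<tau> j) -` A (\<tau> j))))"
    by (subst emeasure_distr[OF m]) (auto simp: pre intro!: sets_PiM_I J)
  also have "\<dots> = (\<Prod>j\<in>\<sigma> ` J. emeasure (measure_pmf (p j)) (g (\<tau> j) -` A (\<tau> j)))"
    using J by (intro emeasure_PiM_emb) (auto simp: prob_space_measure_pmf)
  also have "\<dots> = (\<Prod>i\<in>J. emeasure (measure_pmf (p (\<sigma> i))) (g i -` A i))"
    using bij by (subst prod.reindex) (auto simp: ts intro: inj_on_subset bij_is_inj)
  also have "\<dots> = (\<Prod>i\<in>J. emeasure (measure_pmf (map_pmf (g i) (p (\<sigma> i)))) (A i))"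
    by (simp add: emeasure_map_pmf)
  also have "\<dots> = emeasure (PiM UNIV (\<lambda>i. measure_pmf (map_pmf (g i) (p (\<sigma> i))))) (prod_emb UNIV (\<lambda>i. measure_pmf (map_pmf (g i) (p (\<sigma> i)))) J (PiE J A))"
    using J by (intro emeasure_PiM_emb[symmetric]) (auto simp: prob_space_measure_pmf)
  finally show "emeasure (distr (PiM UNIV (\<lambda>i. measure_pmf (p i))) (PiM UNIV (\<lambda>i. measure_pmf (map_pmf (g i) (p (\<sigma> i))))) (\<lambda>\<omega> i. g i (\<omega> (\<sigma> i)))) (prod_emb UNIV (\<lambda>i. measure_pmf (map_pmf (g i) (p (\<sigma> i)))) J (PiE J A)) = emeasure (PiM UNIV (\<lambda>i. measure_pmf (map_pmf (g i) (p (\<sigma> i))))) (prod_emb UNIV (\<lambda>i. measure_pmf (map_pmf (g i) (p (\<sigma> i)))) J (PiE J A))" .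
next
  show "finite_measure (distr (PiM UNIV (\<lambda>i. measure_pmf (p i))) (PiM UNIV (\<lambda>i. measure_pmf (map_pmf (g i) (p (\<sigma> i))))) (\<lambda>\<omega> i. g i (\<omega> (\<sigma> i))))"
    using prob_space.prob_space_distr[OF prob_PiM_pmf meas_reindex_map[of g \<sigma> p "\<lambda>i. map_pmf (g i) (p (\<sigma> i))"]] by (simp add: prob_space_def)
qed

definition R :: "'d::finite config \<Rightarrow> 'd config" where "R eta = (\<lambda>x. - eta (- x))"

lemma R_cube: "eta \<in> cube \<Longrightarrow> R eta \<in> cube" by (auto simp: cube_def R_def)

lemma meas_R: "R \<in> measurable (Pi0 :: 'd::finite config measure) Pi0"
proof -
  have "(\<lambda>\<omega> x. (\<lambda>x b. - b) x (\<omega> (uminus x))) \<in> measurable (Pi0 :: 'd config measure) Pi0"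
    unfolding Pi0_def by (rule meas_reindex_map)
  then show ?thesis by (simp add: R_def[abs_def])
qed

lemma bij_uminus_vec: "bij (uminus :: int^'d::finite \<Rightarrow> int^'d)"
  by (rule bij_betwI[where g=uminus]) auto

lemma Pi0_R: "distr (Pi0 :: 'd::finite config measure) Pi0 R = Pi0"
proof -
  have mp: "map_pmf uminus (pmf_of_set {-1::real, 1}) = pmf_of_set {-1, 1}"
    by (subst map_pmf_of_set_inj) (auto simp: inj_on_def insert_commute)
  have "distr (PiM UNIV (\<lambda>i::int^'d. measure_pmf (pmf_of_set {-1::real, 1}))) (PiM UNIV (\<lambda>i. measure_pmf (map_pmf ((\<lambda>i. uminus) i) ((\<lambda>i. pmf_of_set {-1::real, 1}) (uminus i))))) (\<lambda>\<omega> i. (\<lambda>i. uminus) i (\<omega> (uminus i)))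
     = PiM UNIV (\<lambda>i. measure_pmf (map_pmf ((\<lambda>i. uminus) i) ((\<lambda>i. pmf_of_set {-1::real, 1}) (uminus i))))"
    by (rule PiM_map_pmf_reindex[OF bij_uminus_vec])
  then show ?thesis unfolding mp by (simp add: Pi0_def R_def[abs_def])
qed

lemma integral_R: fixes G :: "'d::finite config \<Rightarrow> real" shows "G \<in> borel_measurable (Pi0 :: 'd::finite config measure) \<Longrightarrow>
   (\<integral>eta. G (R eta) \<partial>(Pi0 :: 'd config measure)) = (\<integral>eta. G eta \<partial>Pi0)"
proof -
  assume G: "G \<in> borel_measurable (Pi0 :: 'd config measure)"
  have "integral\<^sup>L (distr (Pi0 :: 'd config measure) Pi0 R) G = (\<integral>eta. G (R eta) \<partial>(Pi0 :: 'd config measure))"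
    using integral_distr[of R Pi0 Pi0 G] meas_R G by simp
  then show ?thesis unfolding Pi0_R by simp
qed

lemma odd_mean_Pi0:
  fixes G :: "'d::finite config \<Rightarrow> real"
  assumes G: "G \<in> borel_measurable (Pi0 :: 'd::finite config measure)" and odd: "\<And>eta. eta \<in> cube \<Longrightarrow> G (R eta) = - G eta"
  shows "(\<integral>eta. G eta \<partial>(Pi0 :: 'd config measure)) = 0"
proof -
  have "(\<integral>eta. G eta \<partial>(Pi0 :: 'd config measure)) = (\<integral>eta. G (R eta) \<partial>Pi0)" using integral_R[OF G] by simp
  also have "\<dots> = (\<integral>eta. - G eta \<partial>Pi0)"
    by (rule integral_cong_AE) (auto intro!: measurable_compose[OF meas_R G] G intro: AE_mp[OF AE_cube] simp: odd)
  finally have "(\<integral>eta. G eta \<partial>(Pi0 :: 'd config measure)) = - (\<integral>eta. G eta \<partial>(Pi0 :: 'd config measure))" by simp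
  then show ?thesis by linarith
qed


lemma qq_neg: "qq q0 q1 (- i) = qq q0 q1 i" by (simp add: qq_def)

lemma meas_neg_Bern: "(\<lambda>\<omega> z. \<omega> (- z)) \<in> measurable (Bern q0 q1 :: (int^'d::finite \<Rightarrow> bool) measure) (Bern q0 q1)"
proof -
  have "(\<lambda>\<omega> z. (\<lambda>z b. b) z (\<omega> (uminus z))) \<in> measurable (Bern q0 q1 :: (int^'d::finite \<Rightarrow> bool) measure) (Bern q0 q1)"
    unfolding Bern_def by (rule meas_reindex_map)
  then show ?thesis by simp
qed

lemma Bern_neg: "distr (Bern q0 q1) (Bern q0 q1) (\<lambda>\<omega> z. \<omega> (- z)) = (Bern q0 q1 :: (int^'d::finite \<Rightarrow> bool) measure)"
proof -
  have "distr (PiM UNIV (\<lambda>i::int^'d. measure_pmf (bernoulli_pmf (qq q0 q1 i)))) (PiM UNIV (\<lambda>i. measure_pmf (map_pmf ((\<lambda>i b. b) i) ((\<lambda>i. bernoulli_pmf (qq q0 q1 i)) (uminus i))))) (\<lambda>\<omega> i. (\<lambda>i b. b) i (\<omega> (uminus i)))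
     = PiM UNIV (\<lambda>i. measure_pmf (map_pmf ((\<lambda>i b. b) i) ((\<lambda>i. bernoulli_pmf (qq q0 q1 i)) (uminus i))))"
    by (rule PiM_map_pmf_reindex[OF bij_uminus_vec])
  then show ?thesis by (simp add: Bern_def qq_neg map_pmf_ident)
qed

lemma Iu_R:
  fixes f :: "'d::finite config \<Rightarrow> real"
  assumes f: "f \<in> borel_measurable Pi0" and odd: "\<And>\<xi>. \<xi> \<in> cube \<Longrightarrow> f (R \<xi>) = s * f \<xi>" and eta: "eta \<in> cube"
  shows "Iu q0 q1 u f (R eta) = s * Iu q0 q1 (- u) f eta"
proof -
  have e1: "sh u (flip (R eta) \<omega>) = R (sh (-u) (flip eta (\<lambda>z. \<omega> (- z))))" for \<omega>
    by (auto simp: sh_def flip_def R_def fun_eq_iff add.commute)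
  have "Iu q0 q1 u f (R eta) = (\<integral>\<omega>. s * f (sh (-u) (flip eta (\<lambda>z. \<omega> (- z)))) \<partial>Bern q0 q1)"
    unfolding Iu_def e1 by (rule Bochner_Integration.integral_cong[OF refl]) (auto intro!: odd sh_cube flip_cube eta)
  also have "\<dots> = s * (\<integral>\<omega>. f (sh (-u) (flip eta (\<lambda>z. \<omega> (- z)))) \<partial>Bern q0 q1)" by simp
  also have "(\<integral>\<omega>. f (sh (-u) (flip eta (\<lambda>z. \<omega> (- z)))) \<partial>Bern q0 q1) = (\<integral>\<omega>. f (sh (-u) (flip eta \<omega>)) \<partial>distr (Bern q0 q1) (Bern q0 q1) (\<lambda>\<omega> z. \<omega> (- z)))"
    by (rule integral_distr[OF meas_neg_Bern meas_comp_sh_flip[OF f], symmetric])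
  also have "\<dots> = Iu q0 q1 (- u) f eta" unfolding Bern_neg Iu_def ..
  finally show ?thesis .
qed

lemma sum_neg_reindex:
  fixes F :: "int^'d::finite \<Rightarrow> real"
  assumes S: "finite S" and F: "\<And>v. F v \<noteq> 0 \<Longrightarrow> v \<in> S \<and> - v \<in> S"
  shows "(\<Sum>u\<in>S. F (- u)) = (\<Sum>u\<in>S. F u)"
proof -
  have "(\<Sum>u\<in>S. F (- u)) = (\<Sum>v\<in>uminus ` S. F v)"
    by (subst sum.reindex) (auto simp: inj_on_def)
  also have "\<dots> = (\<Sum>v\<in>S \<inter> uminus ` S. F v)"
    using S F by (intro sum.mono_neutral_right) auto
  also have "\<dots> = (\<Sum>v\<in>S. F v)"
    using S F by (intro sum.mono_neutral_left) (auto simp: image_iff, metis minus_minus)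
  finally show ?thesis .
qed

lemma Top_R:
  fixes f :: "'d::finite config \<Rightarrow> real" and P0 c :: "int^'d \<Rightarrow> real"
  assumes S: "finite S" and P0s: "{u. P0 u \<noteq> 0} \<subseteq> S" and cs: "{u. c u \<noteq> 0} \<subseteq> S"
    and P0e: "\<And>u. P0 (- u) = P0 u" and co: "\<And>u. c (- u) = - c u"
    and f: "f \<in> borel_measurable Pi0" and odd: "\<And>\<xi>. \<xi> \<in> cube \<Longrightarrow> f (R \<xi>) = s * f \<xi>" and eta: "eta \<in> cube"
  shows "Top S P0 c eps q0 q1 f (R eta) = s * Top S P0 c eps q0 q1 f eta"
proof -
  define F where "F v = (P0 v + eps * c v * eta 0) * Iu q0 q1 v f eta" for v
  have "Top S P0 c eps q0 q1 f (R eta) = (\<Sum>u\<in>S. (P0 u + eps * c u * R eta 0) * Iu q0 q1 u f (R eta))"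
    by (rule Top_rep[OF f])
  also have "\<dots> = (\<Sum>u\<in>S. s * F (- u))"
    by (rule sum.cong[OF refl]) (simp only: Iu_R[OF f odd eta], simp add: F_def R_def P0e co algebra_simps)
  also have "\<dots> = s * (\<Sum>u\<in>S. F u)"
  proof -
    have "(\<Sum>u\<in>S. F (- u)) = (\<Sum>u\<in>S. F u)"
    proof (rule sum_neg_reindex[OF S])
      fix v assume "F v \<noteq> 0"
      then have "P0 v \<noteq> 0 \<or> c v \<noteq> 0" by (auto simp: F_def)
      then show "v \<in> S \<and> - v \<in> S" using P0s cs P0e co by (metis (mono_tags) mem_Collect_eq subsetD neg_equal_0_iff_equal)
    qed
    then show ?thesis by (simp add: sum_distrib_left[symmetric])
  qed
  also have "\<dots> = s * Top S P0 c eps q0 q1 f eta" by (simp add: Top_rep[OF f] F_def)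
  finally show ?thesis .
qed


lemma meas_pair_flip:
  "(\<lambda>p. sh u (flip (fst p) (snd p))) \<in> measurable ((Pi0 :: 'd::finite config measure) \<Otimes>\<^sub>M Bern q0 q1) (Pi0 :: 'd config measure)"
proof -
  have coord: "(\<lambda>p. if snd p z then - fst p z else fst p z) \<in> measurable ((Pi0 :: 'd config measure) \<Otimes>\<^sub>M Bern q0 q1) (count_space UNIV)"
    for z :: "int^'d"
  proof (rule measurable_If)
    have m1: "(\<lambda>p. fst p z) \<in> measurable ((Pi0 :: 'd config measure) \<Otimes>\<^sub>M Bern q0 q1) (count_space UNIV)"
      apply (rule measurable_compose[OF measurable_fst])
      unfolding Pi0_def
      apply (rule measurable_compose[OF measurable_component_singleton], simp)
      apply (simp add: measurable_count_space_eq1)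
      done
    show "(\<lambda>p. - fst p z) \<in> measurable ((Pi0 :: 'd config measure) \<Otimes>\<^sub>M Bern q0 q1) (count_space UNIV)"
      by (rule measurable_compose[OF m1]) (simp add: measurable_count_space_eq1)
    show "(\<lambda>p. fst p z) \<in> measurable ((Pi0 :: 'd config measure) \<Otimes>\<^sub>M Bern q0 q1) (count_space UNIV)" by (rule m1)
    have m2: "(\<lambda>p. snd p z) \<in> measurable ((Pi0 :: 'd config measure) \<Otimes>\<^sub>M Bern q0 q1) (count_space UNIV)"
      apply (rule measurable_compose[OF measurable_snd])
      unfolding Bern_def
      apply (rule measurable_compose[OF measurable_component_singleton], simp)
      apply (simp add: measurable_count_space_eq1)
      done
    have "(\<lambda>p. snd p z) -` {True} \<inter> space ((Pi0 :: 'd config measure) \<Otimes>\<^sub>M Bern q0 q1) \<in> sets ((Pi0 :: 'd config measure) \<Otimes>\<^sub>M Bern q0 q1)"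
      by (rule measurable_sets[OF m2]) simp
    then show "{p \<in> space ((Pi0 :: 'd config measure) \<Otimes>\<^sub>M Bern q0 q1). snd p z} \<in> sets ((Pi0 :: 'd config measure) \<Otimes>\<^sub>M Bern q0 q1)"
      by (simp add: vimage_def Int_def conj_commute)
  qed
  have coordU: "(\<lambda>p. sh u (flip (fst p) (snd p)) i) \<in> measurable ((Pi0 :: 'd config measure) \<Otimes>\<^sub>M Bern q0 q1) UU" for i
  proof -
    have e: "(\<lambda>p. sh u (flip (fst p) (snd p)) i) = (\<lambda>p. if snd p (u + i) then - fst p (u + i) else fst p (u + i))"
      by (simp add: sh_def flip_def)
    have eqm: "measurable ((Pi0 :: 'd config measure) \<Otimes>\<^sub>M Bern q0 q1) UU = measurable ((Pi0 :: 'd config measure) \<Otimes>\<^sub>M Bern q0 q1) (count_space UNIV)"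
      by (rule measurable_cong_sets) (rule refl, simp)
    show ?thesis unfolding e eqm by (rule coord)
  qed
  have A: "(\<lambda>p. sh u (flip (fst p) (snd p))) \<in> measurable ((Pi0 :: 'd config measure) \<Otimes>\<^sub>M Bern q0 q1) (PiM UNIV (\<lambda>_::int^'d. UU))"
    by (rule measurable_PiM_single') (rule coordU, simp)
  have B: "measurable ((Pi0 :: 'd config measure) \<Otimes>\<^sub>M Bern q0 q1) (PiM UNIV (\<lambda>_::int^'d. UU)) = measurable ((Pi0 :: 'd config measure) \<Otimes>\<^sub>M Bern q0 q1) (Pi0 :: 'd config measure)"
    by (rule measurable_cong_sets) (rule refl, simp add: Pi0_def)
  show ?thesis using A unfolding B .
qed

lemma Iu_meas:
  fixes f :: "'d::finite config \<Rightarrow> real"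
  assumes f: "f \<in> borel_measurable Pi0"
  shows "Iu q0 q1 u f \<in> borel_measurable Pi0"
proof -
  interpret B: prob_space "Bern q0 q1 :: (int^'d \<Rightarrow> bool) measure" by (rule prob_Bern)
  have "(\<lambda>eta. \<integral>\<omega>. f (sh u (flip eta \<omega>)) \<partial>(Bern q0 q1 :: (int^'d \<Rightarrow> bool) measure)) \<in> borel_measurable Pi0"
  proof (rule B.borel_measurable_lebesgue_integral)
    have e: "case_prod (\<lambda>eta \<omega>. f (sh u (flip eta \<omega>))) = (\<lambda>p. f (sh u (flip (fst p) (snd p))))"
      by (rule ext) (simp only: case_prod_unfold)
    show "case_prod (\<lambda>eta \<omega>. f (sh u (flip eta \<omega>))) \<in> borel_measurable (Pi0 \<Otimes>\<^sub>M Bern q0 q1)"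
      unfolding e by (rule measurable_compose[OF meas_pair_flip f])
  qed
  moreover have "Iu q0 q1 u f = (\<lambda>eta. \<integral>\<omega>. f (sh u (flip eta \<omega>)) \<partial>(Bern q0 q1 :: (int^'d \<Rightarrow> bool) measure))"
    by (rule ext) (simp only: Iu_def)
  ultimately show ?thesis by (simp only:)
qed

lemma Top_meas:
  fixes f :: "'d::finite config \<Rightarrow> real"
  assumes f: "f \<in> borel_measurable Pi0"
  shows "Top S P0 c eps q0 q1 f \<in> borel_measurable Pi0"
proof -
  have "(\<lambda>eta. \<Sum>u\<in>S. (P0 u + eps * c u * eta 0) * Iu q0 q1 u f eta) \<in> borel_measurable Pi0"
  proof (intro borel_measurable_sum borel_measurable_times)
    fix u show "(\<lambda>eta. P0 u + eps * c u * eta 0) \<in> borel_measurable Pi0"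
      by (rule meas_coord[where g="\<lambda>x. P0 u + eps * c u * x"])
    show "Iu q0 q1 u f \<in> borel_measurable Pi0" by (rule Iu_meas[OF f])
  qed
  moreover have "Top S P0 c eps q0 q1 f = (\<lambda>eta. \<Sum>u\<in>S. (P0 u + eps * c u * eta 0) * Iu q0 q1 u f eta)"
    by (rule ext) (rule Top_rep[OF f])
  ultimately show ?thesis by (simp only:)
qed


locale setting =
  fixes S :: "(int^'d::finite) set" and P0 c :: "int^'d \<Rightarrow> real"
    and eps q0 q1 M mubar :: real and Pi :: "'d config measure" and rho :: "'d config \<Rightarrow> real"
  assumes S_fin: "finite S" and P0_supp: "{u. P0 u \<noteq> 0} \<subseteq> S" and c_supp: "{u. c u \<noteq> 0} \<subseteq> S"
    and P0_even: "\<And>u. P0 (- u) = P0 u" and c_odd: "\<And>u. c (- u) = - c u"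
    and P0_sum: "(\<Sum>u\<in>S. P0 u) = 1"
    and M_ge: "1 \<le> M"
    and T_HM: "\<And>f. f \<in> HM M \<Longrightarrow> Top S P0 c eps q0 q1 f \<in> HM M"
    and rho_meas: "rho \<in> borel_measurable Pi0"
    and Pi_def: "Pi = density Pi0 (\<lambda>eta. ennreal (rho eta))"
    and Pi_prob: "prob_space Pi"
    and Pi_inv: "\<And>A. A \<in> sets Pi0 \<Longrightarrow> (\<integral>eta. Top S P0 c eps q0 q1 (indicator A) eta \<partial>Pi) = measure Pi A"
    and mubar_range: "0 < mubar \<and> mubar < 1"
    and contraction: "\<And>f. f \<in> HM M \<Longrightarrow> (\<integral>eta. f eta \<partial>Pi) = 0 \<Longrightarrow>
                          normM M (Top S P0 c eps q0 q1 f) \<le> mubar * normM M f"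
begin

abbreviation T where "T \<equiv> Top S P0 c eps q0 q1"

definition bdd :: "('d config \<Rightarrow> real) \<Rightarrow> bool" where
  "bdd f \<longleftrightarrow> (\<exists>K. \<forall>\<xi>\<in>cube. \<bar>f \<xi>\<bar> \<le> K)"

lemma c_sum0: "(\<Sum>u\<in>S. c u) = 0"
proof -
  have "(\<Sum>u\<in>S. c (- u)) = (\<Sum>u\<in>S. c u)"
  proof (rule sum_neg_reindex[OF S_fin])
    fix v assume "c v \<noteq> 0"
    then show "v \<in> S \<and> - v \<in> S" using c_supp c_odd by (metis (mono_tags) mem_Collect_eq subsetD neg_equal_0_iff_equal)
  qed
  then show ?thesis by (simp add: c_odd sum_negf)
qed

lemma weights_sum: "(\<Sum>u\<in>S. P0 u + eps * c u * eta 0) = 1"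
  by (simp add: sum.distrib P0_sum sum_distrib_right[symmetric] sum_distrib_left[symmetric] c_sum0)

definition CT where "CT = (\<Sum>u\<in>S. \<bar>P0 u\<bar> + \<bar>eps\<bar> * \<bar>c u\<bar>)"

lemma T_bound:
  assumes f: "f \<in> borel_measurable Pi0" and K: "\<And>\<xi>. \<xi> \<in> cube \<Longrightarrow> \<bar>f \<xi>\<bar> \<le> K" and eta: "eta \<in> cube"
  shows "\<bar>T f eta\<bar> \<le> CT * K"
proof -
  have "\<bar>T f eta\<bar> \<le> (\<Sum>u\<in>S. \<bar>(P0 u + eps * c u * eta 0) * Iu q0 q1 u f eta\<bar>)"
    unfolding Top_rep[OF f] by (rule sum_abs)
  also have "\<dots> \<le> (\<Sum>u\<in>S. (\<bar>P0 u\<bar> + \<bar>eps\<bar> * \<bar>c u\<bar>) * K)"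
  proof (rule sum_mono)
    fix u
    have "\<bar>P0 u + eps * c u * eta 0\<bar> \<le> \<bar>P0 u\<bar> + \<bar>eps\<bar> * \<bar>c u\<bar>"
      using cube_abs[OF eta, of 0] by (auto simp: abs_mult intro: order_trans[OF abs_triangle_ineq])
    moreover have "\<bar>Iu q0 q1 u f eta\<bar> \<le> K" by (rule Iu_bound(2)[OF f K eta])
    ultimately show "\<bar>(P0 u + eps * c u * eta 0) * Iu q0 q1 u f eta\<bar> \<le> (\<bar>P0 u\<bar> + \<bar>eps\<bar> * \<bar>c u\<bar>) * K"
      unfolding abs_mult by (intro mult_mono) auto
  qed
  also have "\<dots> = CT * K" by (simp add: CT_def sum_distrib_right)
  finally show ?thesis .
qed

lemma T_bdd: "f \<in> borel_measurable Pi0 \<Longrightarrow> bdd f \<Longrightarrow> bdd (T f)"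
  unfolding bdd_def using T_bound by blast

lemma T_add_const:
  assumes f: "f \<in> borel_measurable Pi0" and K: "\<And>\<xi>. \<xi> \<in> cube \<Longrightarrow> \<bar>f \<xi>\<bar> \<le> K" and eta: "eta \<in> cube"
  shows "T (\<lambda>\<xi>. f \<xi> + a) eta = T f eta + a"
proof -
  have fa: "(\<lambda>\<xi>. f \<xi> + a) \<in> borel_measurable Pi0" using f by measurable
  have "T (\<lambda>\<xi>. f \<xi> + a) eta = (\<Sum>u\<in>S. (P0 u + eps * c u * eta 0) * Iu q0 q1 u f eta + (P0 u + eps * c u * eta 0) * a)"
    unfolding Top_rep[OF fa] by (rule sum.cong[OF refl]) (simp only: Iu_add_const[OF f K eta], simp add: algebra_simps)
  also have "\<dots> = T f eta + a"
    by (simp only: sum.distrib sum_distrib_right[symmetric] weights_sum Top_rep[OF f]) (simp add: P0_sum sum_distrib_left[symmetric] c_sum0)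
  finally show ?thesis .
qed

lemma T_diff:
  assumes f: "f \<in> borel_measurable Pi0" and K: "\<And>\<xi>. \<xi> \<in> cube \<Longrightarrow> \<bar>f \<xi>\<bar> \<le> K"
    and g: "g \<in> borel_measurable Pi0" and K': "\<And>\<xi>. \<xi> \<in> cube \<Longrightarrow> \<bar>g \<xi>\<bar> \<le> K'" and eta: "eta \<in> cube"
  shows "T (\<lambda>\<xi>. f \<xi> - g \<xi>) eta = T f eta - T g eta"
proof -
  have fg: "(\<lambda>\<xi>. f \<xi> - g \<xi>) \<in> borel_measurable Pi0" using f g by measurable
  show ?thesis
    unfolding Top_rep[OF fg] Top_rep[OF f] Top_rep[OF g] sum_subtractf[symmetric]
    by (rule sum.cong[OF refl]) (simp add: Iu_diff[OF f K g K' eta] algebra_simps)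
qed

lemma T_cmult: "T (\<lambda>\<xi>. a * f \<xi>) eta = a * T f eta"
  unfolding Top_def by (simp add: sum_distrib_left algebra_simps)

end


context setting begin

lemma sets_Pi: "sets Pi = sets Pi0" by (simp add: Pi_def)
lemma space_Pi[simp]: "space Pi = UNIV" by (simp add: Pi_def)

lemma meas_Pi: "g \<in> borel_measurable Pi0 \<Longrightarrow> g \<in> borel_measurable Pi"
  by (simp add: measurable_cong_sets[OF sets_Pi refl])

lemma AE_Pi: "AE eta in Pi0. P eta \<Longrightarrow> AE eta in Pi. P eta"
proof -
  assume a: "AE eta in Pi0. P eta"
  have m: "(\<lambda>eta. ennreal (rho eta)) \<in> borel_measurable Pi0" using rho_meas by measurable
  show ?thesis unfolding Pi_def by (subst AE_density[OF m]) (use a in \<open>rule AE_mp\<close>, auto)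
qed

lemma AE_cube_Pi: "AE eta in Pi. eta \<in> cube" by (rule AE_Pi[OF AE_cube])

lemma int_Pi:
  fixes g :: "'d config \<Rightarrow> real"
  assumes g: "g \<in> borel_measurable Pi0" and K: "\<And>\<xi>. \<xi> \<in> cube \<Longrightarrow> \<bar>g \<xi>\<bar> \<le> K"
  shows "integrable Pi g"
proof -
  interpret P: prob_space Pi by (rule Pi_prob)
  show ?thesis
    by (rule P.integrable_const_bound[where B=K]) (use AE_cube_Pi in \<open>rule AE_mp\<close>, auto intro: K meas_Pi g)
qed

lemma mean_le_normM:
  assumes f: "f \<in> HM M"
  shows "\<bar>\<integral>eta. f eta \<partial>Pi\<bar> \<le> normM M f"
proof -
  interpret P: prob_space Pi by (rule Pi_prob)
  have ae: "AE eta in Pi. \<bar>f eta\<bar> \<le> normM M f" by (rule AE_Pi[OF HM_bound[OF f M_ge]])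
  have i: "integrable Pi f"
    by (rule P.integrable_const_bound[where B="normM M f"]) (use ae in simp, rule meas_Pi[OF HM_meas[OF f]])
  have "\<bar>\<integral>eta. f eta \<partial>Pi\<bar> \<le> (\<integral>eta. \<bar>f eta\<bar> \<partial>Pi)" by (rule integral_abs_bound)
  also have "\<dots> \<le> (\<integral>eta. normM M f \<partial>Pi)"
    by (rule Bochner_Integration.integral_mono_AE) (use i ae in auto)
  also have "\<dots> = normM M f" using P.prob_space by simp
  finally show ?thesis .
qed

end


lemma Iu_add:
  assumes f: "f \<in> borel_measurable (Pi0 :: 'd::finite config measure)" and K: "\<And>\<xi>. \<xi> \<in> cube \<Longrightarrow> \<bar>f \<xi>\<bar> \<le> K"
    and g: "g \<in> borel_measurable (Pi0 :: 'd::finite config measure)" and K': "\<And>\<xi>. \<xi> \<in> cube \<Longrightarrow> \<bar>g \<xi>\<bar> \<le> K'"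
    and eta: "eta \<in> cube"
  shows "Iu q0 q1 u (\<lambda>\<xi>. f \<xi> + g \<xi>) eta = Iu q0 q1 u f eta + Iu q0 q1 u g eta"
  unfolding Iu_def using Iu_bound(1)[OF f K eta, of q0 q1 u] Iu_bound(1)[OF g K' eta, of q0 q1 u]
  by (subst Bochner_Integration.integral_add) auto

lemma Iu_lim:
  fixes U :: "nat \<Rightarrow> 'd::finite config \<Rightarrow> real"
  assumes U: "\<And>i. U i \<in> borel_measurable Pi0" and u: "u \<in> borel_measurable Pi0"
    and K: "\<And>i \<xi>. \<xi> \<in> cube \<Longrightarrow> \<bar>U i \<xi>\<bar> \<le> K" and lim: "\<And>x. (\<lambda>i. U i x) \<longlonglongrightarrow> u x"
    and eta: "eta \<in> cube"
  shows "(\<lambda>i. Iu q0 q1 v (U i) eta) \<longlonglongrightarrow> Iu q0 q1 v u eta"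
proof -
  interpret B: prob_space "Bern q0 q1 :: (int^'d \<Rightarrow> bool) measure" by (rule prob_Bern)
  show ?thesis
    unfolding Iu_def
  proof (rule integral_dominated_convergence[where w="\<lambda>_. K"])
    show "(\<lambda>\<omega>. u (sh v (flip eta \<omega>))) \<in> borel_measurable (Bern q0 q1)" by (rule meas_comp_sh_flip[OF u])
    show "\<And>i. (\<lambda>\<omega>. U i (sh v (flip eta \<omega>))) \<in> borel_measurable (Bern q0 q1)" by (rule meas_comp_sh_flip[OF U])
    show "integrable (Bern q0 q1 :: (int^'d \<Rightarrow> bool) measure) (\<lambda>_. K)" by simp
    show "AE x in Bern q0 q1. (\<lambda>i. U i (sh v (flip eta x))) \<longlonglongrightarrow> u (sh v (flip eta x))" by (simp add: lim)
    show "\<And>i. AE x in Bern q0 q1. norm (U i (sh v (flip eta x))) \<le> K"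
      by (auto intro!: K sh_cube flip_cube eta)
  qed
qed

context setting begin

lemma T_add:
  assumes f: "f \<in> borel_measurable Pi0" and K: "\<And>\<xi>. \<xi> \<in> cube \<Longrightarrow> \<bar>f \<xi>\<bar> \<le> K"
    and g: "g \<in> borel_measurable Pi0" and K': "\<And>\<xi>. \<xi> \<in> cube \<Longrightarrow> \<bar>g \<xi>\<bar> \<le> K'" and eta: "eta \<in> cube"
  shows "T (\<lambda>\<xi>. f \<xi> + g \<xi>) eta = T f eta + T g eta"
proof -
  have fg: "(\<lambda>\<xi>. f \<xi> + g \<xi>) \<in> borel_measurable Pi0" using f g by measurable
  show ?thesis
    unfolding Top_rep[OF fg] Top_rep[OF f] Top_rep[OF g] sum.distrib[symmetric]
    by (rule sum.cong[OF refl]) (simp add: Iu_add[OF f K g K' eta] algebra_simps)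
qed

lemma int_T:
  fixes f :: "'d config \<Rightarrow> real"
  assumes f: "f \<in> borel_measurable Pi0" and K: "\<And>\<xi>. \<xi> \<in> cube \<Longrightarrow> \<bar>f \<xi>\<bar> \<le> K"
  shows "integrable Pi (T f)"
  by (rule int_Pi[OF Top_meas[OF f] T_bound[OF f K]])

lemma inv_nonneg:
  fixes u :: "'d config \<Rightarrow> real"
  assumes u: "u \<in> borel_measurable Pi0" "\<And>x. 0 \<le> u x"
  shows "\<forall>K. (\<forall>\<xi>\<in>cube. u \<xi> \<le> K) \<longrightarrow> (\<integral>eta. T u eta \<partial>Pi) = (\<integral>eta. u eta \<partial>Pi)"
  using u
proof (induction rule: borel_measurable_induct_real)
  case (set A)
  interpret P: prob_space Pi by (rule Pi_prob)
  have "(\<integral>eta. indicator A eta \<partial>Pi) = measure Pi A"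
    by simp
  then show ?case using Pi_inv[OF set] by simp
next
  case (mult u c)
  show ?case
  proof (intro allI impI)
    fix K assume K: "\<forall>\<xi>\<in>cube. c * u \<xi> \<le> K"
    have e1: "(\<integral>eta. T (\<lambda>x. c * u x) eta \<partial>Pi) = c * (\<integral>eta. T u eta \<partial>Pi)"
      by (simp add: T_cmult)
    have e2: "(\<integral>eta. c * u eta \<partial>Pi) = c * (\<integral>eta. u eta \<partial>Pi)" by simp
    show "(\<integral>eta. T (\<lambda>x. c * u x) eta \<partial>Pi) = (\<integral>eta. c * u eta \<partial>Pi)"
    proof (cases "c = 0")
      case True then show ?thesis unfolding e1 e2 by simp
    next
      case False
      with mult have c: "c > 0" by auto
      have "\<forall>\<xi>\<in>cube. u \<xi> \<le> K / c" using K c by (auto simp: field_simps mult.commute)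
      then have "(\<integral>eta. T u eta \<partial>Pi) = (\<integral>eta. u eta \<partial>Pi)" using mult by blast
      then show ?thesis unfolding e1 e2 by simp
    qed
  qed
next
  case (add u v)
  show ?case
  proof (intro allI impI)
    fix K assume K: "\<forall>\<xi>\<in>cube. v \<xi> + u \<xi> \<le> K"
    have Ku: "\<bar>u \<xi>\<bar> \<le> K" if "\<xi> \<in> cube" for \<xi>
    proof -
      have "0 \<le> u \<xi>" "0 \<le> v \<xi>" "v \<xi> + u \<xi> \<le> K" using add(2,4) K that by auto
      then show ?thesis by simp
    qed
    have Kv: "\<bar>v \<xi>\<bar> \<le> K" if "\<xi> \<in> cube" for \<xi>
    proof -
      have "0 \<le> u \<xi>" "0 \<le> v \<xi>" "v \<xi> + u \<xi> \<le> K" using add(2,4) K that by auto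
      then show ?thesis by simp
    qed
    have "\<forall>\<xi>\<in>cube. u \<xi> \<le> K" using Ku abs_le_D1 by blast
    then have iu: "(\<integral>eta. T u eta \<partial>Pi) = (\<integral>eta. u eta \<partial>Pi)" using add(6) by blast
    have "\<forall>\<xi>\<in>cube. v \<xi> \<le> K" using Kv abs_le_D1 by blast
    then have iv: "(\<integral>eta. T v eta \<partial>Pi) = (\<integral>eta. v eta \<partial>Pi)" using add(7) by blast
    have "(\<integral>eta. T (\<lambda>x. v x + u x) eta \<partial>Pi) = (\<integral>eta. T v eta + T u eta \<partial>Pi)"
    proof (rule integral_cong_AE)
      have "(\<lambda>x. v x + u x) \<in> borel_measurable Pi0" using add by measurable
      then show "T (\<lambda>x. v x + u x) \<in> borel_measurable Pi" by (intro meas_Pi Top_meas)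
      show "(\<lambda>eta. T v eta + T u eta) \<in> borel_measurable Pi"
        using add by (intro meas_Pi borel_measurable_add Top_meas)
      show "AE eta in Pi. T (\<lambda>x. v x + u x) eta = T v eta + T u eta"
        using AE_cube_Pi by (rule AE_mp) (auto intro!: T_add add Kv Ku)
    qed
    also have "\<dots> = (\<integral>eta. T v eta \<partial>Pi) + (\<integral>eta. T u eta \<partial>Pi)"
      by (rule Bochner_Integration.integral_add) (auto intro!: int_T add Kv Ku)
    also have "\<dots> = (\<integral>eta. v eta + u eta \<partial>Pi)"
      unfolding iu iv by (rule Bochner_Integration.integral_add[symmetric]) (auto intro!: int_Pi add Kv Ku)
    finally show "(\<integral>eta. T (\<lambda>x. v x + u x) eta \<partial>Pi) = (\<integral>eta. v eta + u eta \<partial>Pi)" .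
  qed
next
  case (seq U)
  show ?case
  proof (intro allI impI)
    fix K assume K: "\<forall>\<xi>\<in>cube. u \<xi> \<le> K"
    have limU: "\<And>x. (\<lambda>i. U i x) \<longlonglongrightarrow> u x" using seq(4) by simp
    have Uu: "U i x \<le> u x" for i x
      using seq(3) limU[of x] by (intro incseq_le) (auto simp: incseq_def le_fun_def)
    have KU: "\<And>i \<xi>. \<xi> \<in> cube \<Longrightarrow> \<bar>U i \<xi>\<bar> \<le> K"
      using K Uu seq(2) by (metis abs_of_nonneg order_trans)
    have Ku: "\<And>\<xi>. \<xi> \<in> cube \<Longrightarrow> \<bar>u \<xi>\<bar> \<le> K" using K u(2) by (simp add: abs_of_nonneg)
    have IH: "(\<integral>eta. T (U i) eta \<partial>Pi) = (\<integral>eta. U i eta \<partial>Pi)" for i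
      using seq(5)[of i] KU by (meson abs_le_D1)
    have l1: "(\<lambda>i. \<integral>eta. U i eta \<partial>Pi) \<longlonglongrightarrow> (\<integral>eta. u eta \<partial>Pi)"
    proof (rule integral_dominated_convergence[where w="\<lambda>_. K"])
      show "u \<in> borel_measurable Pi" by (rule meas_Pi[OF u(1)])
      show "\<And>i. U i \<in> borel_measurable Pi" by (rule meas_Pi[OF seq(1)])
      interpret P: prob_space Pi by (rule Pi_prob)
      show "integrable Pi (\<lambda>_. K)" by simp
      show "AE x in Pi. (\<lambda>i. U i x) \<longlonglongrightarrow> u x" using limU by simp
      show "\<And>i. AE x in Pi. norm (U i x) \<le> K" using AE_cube_Pi by (rule AE_mp) (auto intro: KU)
    qed
    have l2: "(\<lambda>i. \<integral>eta. T (U i) eta \<partial>Pi) \<longlonglongrightarrow> (\<integral>eta. T u eta \<partial>Pi)"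
    proof (rule integral_dominated_convergence[where w="\<lambda>_. CT * K"])
      show "T u \<in> borel_measurable Pi" by (rule meas_Pi[OF Top_meas[OF u(1)]])
      show "\<And>i. T (U i) \<in> borel_measurable Pi" by (rule meas_Pi[OF Top_meas[OF seq(1)]])
      interpret P: prob_space Pi by (rule Pi_prob)
      show "integrable Pi (\<lambda>_. CT * K)" by simp
      show "AE x in Pi. (\<lambda>i. T (U i) x) \<longlonglongrightarrow> T u x"
        using AE_cube_Pi
      proof (rule AE_mp, intro AE_I2 impI)
        fix eta :: "'d config" assume eta: "eta \<in> cube"
        show "(\<lambda>i. T (U i) eta) \<longlonglongrightarrow> T u eta"
          unfolding Top_rep[OF seq(1)] Top_rep[OF u(1)]
          by (intro tendsto_sum tendsto_mult tendsto_const Iu_lim[OF seq(1) u(1) KU limU eta]) simp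
      qed
      show "\<And>i. AE x in Pi. norm (T (U i) x) \<le> CT * K"
        using AE_cube_Pi by (rule AE_mp) (auto intro: T_bound[OF seq(1) KU])
    qed
    show "(\<integral>eta. T u eta \<partial>Pi) = (\<integral>eta. u eta \<partial>Pi)"
      using LIMSEQ_unique[OF l2] l1 IH by simp
  qed
qed

lemma inv:
  fixes f :: "'d config \<Rightarrow> real"
  assumes f: "f \<in> borel_measurable Pi0" and K: "\<And>\<xi>. \<xi> \<in> cube \<Longrightarrow> \<bar>f \<xi>\<bar> \<le> K"
  shows "(\<integral>eta. T f eta \<partial>Pi) = (\<integral>eta. f eta \<partial>Pi)"
proof -
  define fp where "fp x = max 0 (f x)" for x
  define fn where "fn x = max 0 (- f x)" for x
  have fpm: "fp \<in> borel_measurable Pi0" unfolding fp_def using f by measurable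
  have fnm: "fn \<in> borel_measurable Pi0" unfolding fn_def using f by measurable
  have Kp: "\<And>\<xi>. \<xi> \<in> cube \<Longrightarrow> \<bar>fp \<xi>\<bar> \<le> K" using K by (fastforce simp: fp_def)
  have Kn: "\<And>\<xi>. \<xi> \<in> cube \<Longrightarrow> \<bar>fn \<xi>\<bar> \<le> K" using K by (fastforce simp: fn_def)
  have ip: "(\<integral>eta. T fp eta \<partial>Pi) = (\<integral>eta. fp eta \<partial>Pi)"
    using inv_nonneg[OF fpm] Kp by (auto simp: fp_def)
  have in': "(\<integral>eta. T fn eta \<partial>Pi) = (\<integral>eta. fn eta \<partial>Pi)"
    using inv_nonneg[OF fnm] Kn by (auto simp: fn_def)
  have fe: "f = (\<lambda>\<xi>. fp \<xi> - fn \<xi>)" by (auto simp: fp_def fn_def fun_eq_iff max_def)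
  have "(\<integral>eta. T f eta \<partial>Pi) = (\<integral>eta. T fp eta - T fn eta \<partial>Pi)"
  proof (rule integral_cong_AE)
    show "T f \<in> borel_measurable Pi" by (rule meas_Pi[OF Top_meas[OF f]])
    show "(\<lambda>eta. T fp eta - T fn eta) \<in> borel_measurable Pi"
      by (intro borel_measurable_diff meas_Pi Top_meas fpm fnm)
    show "AE eta in Pi. T f eta = T fp eta - T fn eta"
      using AE_cube_Pi by (rule AE_mp) (auto simp: T_diff[OF fpm Kp fnm Kn, symmetric] fe[symmetric])
  qed
  also have "\<dots> = (\<integral>eta. T fp eta \<partial>Pi) - (\<integral>eta. T fn eta \<partial>Pi)"
    by (rule Bochner_Integration.integral_diff) (auto intro!: int_T fpm fnm Kp Kn)
  also have "\<dots> = (\<integral>eta. fp eta - fn eta \<partial>Pi)"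
    unfolding ip in' by (rule Bochner_Integration.integral_diff[symmetric]) (auto intro!: int_Pi fpm fnm Kp Kn)
  also have "\<dots> = (\<integral>eta. f eta \<partial>Pi)" by (simp add: fe[symmetric])
  finally show ?thesis .
qed

end


context setting begin

definition ok :: "('d config \<Rightarrow> real) \<Rightarrow> bool" where
  "ok f \<longleftrightarrow> f \<in> HM M \<and> (\<exists>K. \<forall>\<xi>\<in>cube. \<bar>f \<xi>\<bar> \<le> K)"

definition par :: "real \<Rightarrow> ('d config \<Rightarrow> real) \<Rightarrow> bool" where
  "par s f \<longleftrightarrow> (\<forall>\<xi>\<in>cube. f (R \<xi>) = s * f \<xi>)"

lemma ok_meas: "ok f \<Longrightarrow> f \<in> borel_measurable Pi0"
  unfolding ok_def using HM_meas by blast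

lemma ok_T: "ok f \<Longrightarrow> ok (T f)"
  unfolding ok_def using T_HM T_bound HM_meas by metis

lemma ok_mult0: "ok f \<Longrightarrow> ok (\<lambda>eta. eta 0 * f eta)"
  unfolding ok_def using HM_mult0[OF _ M_ge]
  by (auto simp: abs_mult cube_abs)

lemma ok_add_const: "ok f \<Longrightarrow> ok (\<lambda>eta. f eta + a)"
  unfolding ok_def using HM_add_const[of f M a] M_ge
  by (auto intro: order_trans[OF abs_triangle_ineq] add_mono)

lemma par_T: "ok f \<Longrightarrow> par s f \<Longrightarrow> par s (T f)"
  unfolding par_def using Top_R[OF S_fin P0_supp c_supp P0_even c_odd ok_meas] by blast

lemma par_mult0: "par s f \<Longrightarrow> par (- s) (\<lambda>eta. eta 0 * f eta)"
  unfolding par_def by (auto simp: R_def)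

lemma int_ok: "ok f \<Longrightarrow> integrable Pi f"
  unfolding ok_def using int_Pi HM_meas by blast

lemma inv_ok: "ok f \<Longrightarrow> (\<integral>eta. T f eta \<partial>Pi) = (\<integral>eta. f eta \<partial>Pi)"
  unfolding ok_def using inv HM_meas by blast

lemma coef_empty: "walsh_coef f {} = (\<integral>eta. f eta \<partial>Pi0)"
  by (simp add: walsh_coef_def)

lemma step_gen:
  assumes f: "ok f" and a: "a = (\<integral>eta. f eta \<partial>Pi)"
  shows "(\<integral>eta. T f eta \<partial>Pi) = a \<and> normM M (\<lambda>eta. T f eta - a) \<le> mubar * normM M (\<lambda>eta. f eta - a)"
proof -
  interpret P: prob_space Pi by (rule Pi_prob)
  have fa: "ok (\<lambda>eta. f eta + - a)" by (rule ok_add_const[OF f])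
  then have fah: "(\<lambda>eta. f eta + - a) \<in> HM M" by (simp add: ok_def)
  obtain K where K: "\<And>\<xi>. \<xi> \<in> cube \<Longrightarrow> \<bar>f \<xi>\<bar> \<le> K" using f by (auto simp: ok_def)
  have mean0: "(\<integral>eta. f eta + - a \<partial>Pi) = 0"
    using int_ok[OF f] a P.prob_space by simp
  have c: "normM M (T (\<lambda>eta. f eta + - a)) \<le> mubar * normM M (\<lambda>eta. f eta + - a)"
    by (rule contraction[OF fah mean0])
  have ae: "AE eta in Pi0. T (\<lambda>eta. f eta + - a) eta = T f eta - a"
    using AE_cube
  proof (rule AE_mp, intro AE_I2 impI)
    fix eta :: "'d config" assume "eta \<in> cube"
    then show "T (\<lambda>eta. f eta + - a) eta = T f eta - a" using T_add_const[OF ok_meas[OF f] K, of eta "-a"] by simp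
  qed
  have "normM M (\<lambda>eta. T f eta - a) = normM M (T (\<lambda>eta. f eta + - a))"
    using HM_AE[OF T_HM[OF fah] _ ae] Top_meas[OF ok_meas[OF f]] by auto
  with c have "normM M (\<lambda>eta. T f eta - a) \<le> mubar * normM M (\<lambda>eta. f eta - a)" by simp
  moreover have "(\<integral>eta. T f eta \<partial>Pi) = a" using inv_ok[OF f] a by simp
  ultimately show ?thesis by simp
qed

lemma odd_mean:
  assumes f: "ok f" and odd: "par (-1) f"
  shows "(\<integral>eta. f eta \<partial>Pi) = 0"
proof -
  define a where "a = (\<integral>eta. f eta \<partial>Pi)"
  define C where "C = normM M (\<lambda>eta. f eta - a)"
  have inv: "ok ((T ^^ j) f) \<and> par (-1) ((T ^^ j) f) \<and> (\<integral>eta. (T ^^ j) f eta \<partial>Pi) = a \<and>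
      normM M (\<lambda>eta. (T ^^ j) f eta - a) \<le> mubar ^ j * C" for j
  proof (induction j)
    case 0 then show ?case using f odd by (simp add: a_def C_def)
  next
    case (Suc j)
    have s: "(\<integral>eta. T ((T ^^ j) f) eta \<partial>Pi) = a \<and> normM M (\<lambda>eta. T ((T ^^ j) f) eta - a) \<le> mubar * normM M (\<lambda>eta. (T ^^ j) f eta - a)"
      using step_gen[of "(T ^^ j) f" a] Suc by auto
    have "mubar * normM M (\<lambda>eta. (T ^^ j) f eta - a) \<le> mubar * (mubar ^ j * C)"
      using Suc mubar_range by (intro mult_left_mono) auto
    then show ?case using s Suc ok_T par_T by (auto simp: algebra_simps)
  qed
  have bound: "\<bar>a\<bar> \<le> mubar ^ j * C" for j
  proof -
    have okj: "ok ((T ^^ j) f)" using inv by blast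
    have mj: "(\<integral>eta. (T ^^ j) f eta \<partial>Pi0) = 0"
      using odd_mean_Pi0[OF ok_meas[OF okj]] inv[of j] by (auto simp: par_def)
    have "walsh_coef (\<lambda>eta. (T ^^ j) f eta + - a) {} = - a"
      using coef_add_const[OF HM_int, of "(T ^^ j) f" M "{}" "- a"] okj mj by (simp add: ok_def coef_empty)
    moreover have "\<bar>walsh_coef (\<lambda>eta. (T ^^ j) f eta + - a) {}\<bar> * M ^ card ({}::(int^'d) set) \<le> normM M (\<lambda>eta. (T ^^ j) f eta + - a)"
      using coef_le_normM[of "\<lambda>eta. (T ^^ j) f eta + - a" M "{}"] ok_add_const[OF okj, of "- a"] M_ge by (auto simp: ok_def)
    ultimately show ?thesis using inv[of j] by simp
  qed
  have "(\<lambda>j. mubar ^ j * C) \<longlonglongrightarrow> 0 * C"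
    by (intro tendsto_mult LIMSEQ_power_zero tendsto_const) (use mubar_range in auto)
  then have "\<bar>a\<bar> \<le> 0" using bound by (intro LIMSEQ_le_const[where X="\<lambda>j. mubar ^ j * C"]) auto
  then show ?thesis by (simp add: a_def)
qed

lemma step_odd:
  assumes f: "ok f" and odd: "par (-1) f"
  shows "normM M (T f) \<le> mubar * normM M f"
  using contraction[of f] odd_mean[OF f odd] f by (simp add: ok_def)

end


definition FD :: "nat set \<Rightarrow> 'd::finite config list \<Rightarrow> real" where
  "FD D xs = (\<Prod>t\<in>D. (xs ! t) 0)"

definition Dp :: "nat set \<Rightarrow> nat set" where "Dp D = {t. Suc t \<in> D}"

lemma FD_cons: assumes "finite D"
  shows "FD D (eta # xs) = (if 0 \<in> D then eta 0 else 1) * FD (Dp D) xs"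
proof -
  have D: "D = (D \<inter> {0}) \<union> Suc ` Dp D"
    by (auto simp: Dp_def image_iff) (metis not0_implies_Suc)
  have fin: "finite (Dp D)" using assms unfolding Dp_def
    by (rule finite_subset[rotated, OF finite_imageI[of D "\<lambda>t. t - 1"]]) (force simp: image_iff)
  have "FD D (eta # xs) = (\<Prod>t\<in>D \<inter> {0}. ((eta # xs) ! t) 0) * (\<Prod>t\<in>Suc ` Dp D. ((eta # xs) ! t) 0)"
    unfolding FD_def by (subst D) (rule prod.union_disjoint, use assms fin in auto)
  also have "(\<Prod>t\<in>Suc ` Dp D. ((eta # xs) ! t) 0) = FD (Dp D) xs"
    unfolding FD_def by (subst prod.reindex) auto
  also have "(\<Prod>t\<in>D \<inter> {0}. ((eta # xs) ! t) 0) = (if 0 \<in> D then eta 0 else 1)"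
    by (cases "0 \<in> D") (auto simp: Int_absorb1 Int_commute)
  finally show ?thesis by simp
qed

lemma card_Dp: assumes "finite D" shows "card D = card (Dp D) + (if 0 \<in> D then 1 else 0)"
proof -
  have D: "D = (D \<inter> {0}) \<union> Suc ` Dp D"
    by (auto simp: Dp_def image_iff) (metis not0_implies_Suc)
  have fin: "finite (Dp D)" using assms unfolding Dp_def
    by (rule finite_subset[rotated, OF finite_imageI[of D "\<lambda>t. t - 1"]]) (force simp: image_iff)
  have "card D = card (D \<inter> {0}) + card (Suc ` Dp D)"
    by (subst D) (rule card_Un_disjoint, use assms fin in auto)
  also have "card (Suc ` Dp D) = card (Dp D)" by (simp add: card_image)
  finally show ?thesis by (cases "0 \<in> D") (auto simp: Int_absorb1 Int_commute)
qed

lemma chain_cmult: "chain_exp T n (\<lambda>xs. a * G xs) eta = a * chain_exp T n G eta"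
  if Tc: "\<And>f a eta. T (\<lambda>\<xi>. a * f \<xi>) eta = a * T f eta"
  using that
proof (induction n arbitrary: G eta)
  case 0 then show ?case by simp
next
  case (Suc n)
  have "chain_exp T (Suc n) (\<lambda>xs. a * G xs) eta = T (\<lambda>eta'. a * chain_exp T n (\<lambda>xs. G (eta # xs)) eta') eta"
  proof -
    have "(\<lambda>eta'. chain_exp T n (\<lambda>xs. a * G (eta # xs)) eta') = (\<lambda>eta'. a * chain_exp T n (\<lambda>xs. G (eta # xs)) eta')"
      by (rule ext) (rule Suc.IH[OF Tc])
    then show ?thesis by simp
  qed
  also have "\<dots> = a * chain_exp T (Suc n) G eta" by (simp add: Tc)
  finally show ?case .
qed


lemma chain_step:
  assumes D: "finite D" and Tc: "\<And>f a eta. T (\<lambda>\<xi>. a * f \<xi>) eta = a * T f eta"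
  shows "chain_exp T (Suc n) (FD D) eta = (if 0 \<in> D then eta 0 else 1) * T (chain_exp T n (FD (Dp D))) eta"
proof -
  have "(\<lambda>eta'. chain_exp T n (\<lambda>xs. FD D (eta # xs)) eta') = (\<lambda>eta'. (if 0 \<in> D then eta 0 else 1) * chain_exp T n (FD (Dp D)) eta')"
    by (rule ext) (simp add: FD_cons[OF D] chain_cmult[OF Tc])
  then show ?thesis by (simp add: Tc)
qed

lemma chain_base: "D \<subseteq> {0} \<Longrightarrow> chain_exp T 0 (FD D) eta = (if 0 \<in> D then eta 0 else 1)"
  by (cases "0 \<in> D") (auto simp: FD_def subset_singleton_iff)

definition bnd :: "real \<Rightarrow> real \<Rightarrow> nat \<Rightarrow> real" where
  "bnd M mu k = M ^ k * mu ^ (k div 2) * (1 + 2 * mu) ^ ((k - 1) div 2)"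

lemma bnd_nonneg: "0 \<le> M \<Longrightarrow> 0 \<le> mu \<Longrightarrow> 0 \<le> bnd M mu k"
  by (simp add: bnd_def)

lemma bnd_odd: "odd k \<Longrightarrow> M * mu * bnd M mu k = bnd M mu (Suc k)"
proof -
  assume "odd k"
  then obtain m where k: "k = 2 * m + 1" by (metis oddE)
  have a: "Suc k div 2 = m + 1" "(Suc k - 1) div 2 = m" "k div 2 = m" "(k - 1) div 2 = m" using k by auto
  show ?thesis unfolding bnd_def a by (simp add: k algebra_simps)
qed

lemma bnd_even: "even k \<Longrightarrow> k \<ge> 1 \<Longrightarrow> M * (1 + 2 * mu) * bnd M mu k = bnd M mu (Suc k)"
proof -
  assume "even k" "k \<ge> 1"
  then obtain j where j: "k = 2 * j" by (auto elim: evenE)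
  with \<open>k \<ge> 1\<close> have "j \<ge> 1" by simp
  define m where "m = j - 1"
  have k: "k = 2 * m + 2" using j \<open>j \<ge> 1\<close> by (simp add: m_def)
  have a: "Suc k div 2 = m + 1" "(Suc k - 1) div 2 = m + 1" "k div 2 = m + 1" "(k - 1) div 2 = m" using k by auto
  show ?thesis unfolding bnd_def a by (simp add: k algebra_simps)
qed


context setting begin

lemma HM_zero: "(\<lambda>_::'d config. 0) \<in> HM M \<and> normM M (\<lambda>_::'d config. 0) = 0"
proof -
  have c: "walsh_coef (\<lambda>_::'d config. 0) G = 0" for G by (simp add: walsh_coef_def)
  show ?thesis by (simp add: HM_def L2Pi0_def normM_def c)
qed

lemma ok_one: "ok (\<lambda>_::'d config. 1) \<and> normM M (\<lambda>_::'d config. 1) \<le> 1"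
proof -
  have z: "ok (\<lambda>_::'d config. 0)" using HM_zero by (auto simp: ok_def)
  have "(\<lambda>_::'d config. 0 + 1) \<in> HM M \<and> normM M (\<lambda>_::'d config. 0 + 1) \<le> normM M (\<lambda>_::'d config. 0) + \<bar>1\<bar>"
    using HM_add_const[of "\<lambda>_::'d config. 0" M 1] HM_zero M_ge by auto
  then show ?thesis using ok_add_const[OF z, of 1] HM_zero by simp
qed

lemma eta0: "ok (\<lambda>eta. eta 0) \<and> par (-1) (\<lambda>eta::'d config. eta 0) \<and> normM M (\<lambda>eta::'d config. eta 0) \<le> M"
proof -
  have "ok (\<lambda>eta::'d config. eta 0 * 1)" using ok_mult0 ok_one by blast
  moreover have "normM M (\<lambda>eta::'d config. eta 0 * 1) \<le> M * normM M (\<lambda>_::'d config. 1)"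
    using HM_mult0[of "\<lambda>_. 1" M] ok_one M_ge by (auto simp: ok_def)
  moreover have "M * normM M (\<lambda>_::'d config. 1) \<le> M" using ok_one M_ge by (simp add: mult_left_le)
  ultimately show ?thesis by (auto simp: par_def R_def)
qed

lemma nm_sub: "f \<in> HM M \<Longrightarrow> normM M (\<lambda>eta. f eta - a) \<le> normM M f + \<bar>a\<bar>"
  using HM_add_const[of f M "-a"] M_ge by simp

lemma nm_back: "f \<in> HM M \<Longrightarrow> normM M f \<le> normM M (\<lambda>eta. f eta - a) + \<bar>a\<bar>"
proof -
  assume f: "f \<in> HM M"
  have g: "(\<lambda>eta. f eta - a) \<in> HM M" using HM_add_const[of f M "-a"] M_ge f by simp
  show ?thesis using HM_add_const[OF g, of a] M_ge by simp
qed

abbreviation bd where "bd k \<equiv> bnd M mubar k"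

lemma bd_nonneg: "0 \<le> bd k" using bnd_nonneg M_ge mubar_range by auto

definition info :: "bool \<Rightarrow> nat \<Rightarrow> ('d config \<Rightarrow> real) \<Rightarrow> bool" where
  "info z k V \<longleftrightarrow> ok V \<and> par ((-1)^k) V \<and> (z \<longrightarrow> normM M V \<le> bd k) \<and>
     (\<not> z \<and> odd k \<longrightarrow> normM M V \<le> mubar * bd k) \<and>
     (\<not> z \<and> even k \<longrightarrow> \<bar>\<integral>eta. V eta \<partial>Pi\<bar> \<le> bd k \<and> normM M (\<lambda>eta. V eta - (\<integral>eta. V eta \<partial>Pi)) \<le> 2 * mubar * bd k)"

lemma info_T:
  assumes I: "info z k V"
  shows "info False k (T V) \<and> normM M (T V) \<le> (if odd k then mubar else 1 + 2 * mubar) * bd k"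
proof -
  have okV: "ok V" and parV: "par ((-1)^k) V" using I by (auto simp: info_def)
  have mu: "0 < mubar" "mubar < 1" using mubar_range by auto
  have HV: "V \<in> HM M" using okV by (simp add: ok_def)
  have okT: "ok (T V)" by (rule ok_T[OF okV])
  have parT: "par ((-1)^k) (T V)" by (rule par_T[OF okV parV])
  show ?thesis
  proof (cases "odd k")
    case True
    then have p: "par (-1) V" using parV by simp
    have nV: "normM M V \<le> bd k"
    proof (cases z)
      case True then show ?thesis using I by (simp add: info_def)
    next
      case False
      then have "normM M V \<le> mubar * bd k" using I \<open>odd k\<close> by (simp add: info_def)
      also have "\<dots> \<le> bd k" using mu bd_nonneg[of k] by (simp add: mult_left_le_one_le)
      finally show ?thesis .
    qed
    have "normM M (T V) \<le> mubar * normM M V" by (rule step_odd[OF okV p])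
    also have "\<dots> \<le> mubar * bd k" using nV mu by (intro mult_left_mono) auto
    finally show ?thesis using True okT parT by (simp add: info_def)
  next
    case False
    define a where "a = (\<integral>eta. V eta \<partial>Pi)"
    have sg: "(\<integral>eta. T V eta \<partial>Pi) = a \<and> normM M (\<lambda>eta. T V eta - a) \<le> mubar * normM M (\<lambda>eta. V eta - a)"
      by (rule step_gen[OF okV a_def])
    have ab: "\<bar>a\<bar> \<le> bd k \<and> normM M (\<lambda>eta. T V eta - a) \<le> 2 * mubar * bd k"
    proof (cases z)
      case True
      have nV: "normM M V \<le> bd k" using I True by (simp add: info_def)
      have aV: "\<bar>a\<bar> \<le> normM M V" unfolding a_def by (rule mean_le_normM[OF HV])
      have "normM M (\<lambda>eta. V eta - a) \<le> normM M V + \<bar>a\<bar>" by (rule nm_sub[OF HV])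
      also have "\<dots> \<le> 2 * bd k" using nV aV by simp
      finally have "mubar * normM M (\<lambda>eta. V eta - a) \<le> mubar * (2 * bd k)" using mu by (intro mult_left_mono) auto
      then show ?thesis using sg aV nV by simp
    next
      case z: False
      have i: "\<bar>a\<bar> \<le> bd k" "normM M (\<lambda>eta. V eta - a) \<le> 2 * mubar * bd k"
        using I z False by (auto simp: info_def a_def)
      have "mubar * normM M (\<lambda>eta. V eta - a) \<le> mubar * (2 * mubar * bd k)" using i mu by (intro mult_left_mono) auto
      also have "\<dots> \<le> 1 * (2 * mubar * bd k)" using mu bd_nonneg[of k] by (intro mult_right_mono) auto
      finally show ?thesis using sg i by simp
    qed
    have HT: "T V \<in> HM M" using okT by (simp add: ok_def)
    have "normM M (T V) \<le> normM M (\<lambda>eta. T V eta - a) + \<bar>a\<bar>" by (rule nm_back[OF HT])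
    also have "\<dots> \<le> (1 + 2 * mubar) * bd k" using ab by (simp add: algebra_simps)
    finally show ?thesis using False okT parT ab sg by (simp add: info_def)
  qed
qed

end


lemma finite_Dp: "finite D \<Longrightarrow> finite (Dp D)"
proof -
  assume D: "finite D"
  have "{t. Suc t \<in> D} \<subseteq> (\<lambda>t. t - 1) ` D"
  proof
    fix t assume "t \<in> {t. Suc t \<in> D}"
    then show "t \<in> (\<lambda>t. t - 1) ` D" by (intro image_eqI[where x="Suc t"]) auto
  qed
  then show ?thesis unfolding Dp_def using finite_subset finite_imageI D by blast
qed

context setting begin

lemma main_ind:
  "finite D \<Longrightarrow> D \<subseteq> {0..n} \<Longrightarrow> n \<in> D \<Longrightarrow> info (0 \<in> D) (card D) (chain_exp T n (FD D))"
proof (induction n arbitrary: D)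
  case 0
  then have D: "D = {0}" by auto
  have e: "chain_exp T 0 (FD {0}) = (\<lambda>eta. eta 0)" by (rule ext) (simp add: FD_def)
  show ?case using eta0 by (simp add: e D info_def bnd_def)
next
  case (Suc n)
  define D' where "D' = Dp D"
  have fD': "finite D'" unfolding D'_def by (rule finite_Dp[OF Suc.prems(1)])
  have sD': "D' \<subseteq> {0..n}" using Suc.prems(2) by (auto simp: D'_def Dp_def)
  have nD': "n \<in> D'" using Suc.prems(3) by (simp add: D'_def Dp_def)
  have IH: "info (0 \<in> D') (card D') (chain_exp T n (FD D'))" by (rule Suc.IH[OF fD' sD' nD'])
  define V' where "V' = chain_exp T n (FD D')"
  have k1: "card D' \<ge> 1" using fD' nD' by (metis One_nat_def Suc_leI card_gt_0_iff empty_iff)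
  have cD: "card D = card D' + (if 0 \<in> D then 1 else 0)" unfolding D'_def by (rule card_Dp[OF Suc.prems(1)])
  have step: "chain_exp T (Suc n) (FD D) = (\<lambda>eta. (if 0 \<in> D then eta 0 else 1) * T V' eta)"
    unfolding V'_def D'_def by (rule ext) (rule chain_step[OF Suc.prems(1) T_cmult])
  have iT: "info False (card D') (T V') \<and> normM M (T V') \<le> (if odd (card D') then mubar else 1 + 2 * mubar) * bd (card D')"
    using info_T[OF IH[folded V'_def]] .
  show ?case
  proof (cases "0 \<in> D")
    case False
    then show ?thesis using iT step cD by simp
  next
    case True
    have okT: "ok (T V')" and parT: "par ((-1) ^ card D') (T V')" using iT by (auto simp: info_def)
    have ok: "ok (\<lambda>eta. eta 0 * T V' eta)" by (rule ok_mult0[OF okT])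
    have par: "par ((-1) ^ Suc (card D')) (\<lambda>eta. eta 0 * T V' eta)" using par_mult0[OF parT] by simp
    have "normM M (\<lambda>eta. eta 0 * T V' eta) \<le> M * normM M (T V')"
      using HM_mult0[of "T V'" M] okT M_ge by (auto simp: ok_def)
    also have "\<dots> \<le> M * ((if odd (card D') then mubar else 1 + 2 * mubar) * bd (card D'))"
      using iT M_ge by (intro mult_left_mono) auto
    also have "\<dots> = bd (Suc (card D'))"
      using bnd_odd[of "card D'" M mubar] bnd_even[of "card D'" M mubar] k1 by (auto simp: algebra_simps)
    finally show ?thesis using True ok par step cD by (simp add: info_def)
  qed
qed

lemma G_bound:
  assumes fin: "finite gam" and ne: "gam \<noteq> {}"
  shows "G_gamma T gam \<in> HM M \<and> normM M (G_gamma T gam) \<le> bd (card gam)"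
proof -
  define m where "m = Min gam"
  define n where "n = Max gam - m"
  define D where "D = (\<lambda>t. t - m) ` gam"
  have mle: "m \<le> t" if "t \<in> gam" for t using fin that by (simp add: m_def)
  have inj: "inj_on (\<lambda>t. t - m) gam"
  proof (rule inj_onI)
    fix x y assume "x \<in> gam" "y \<in> gam" "x - m = y - m"
    then show "x = y" using mle[of x] mle[of y] by arith
  qed
  have F: "(\<lambda>xs. \<Prod>t\<in>gam. (xs ! (t - m)) 0) = FD D"
    by (rule ext) (simp add: FD_def D_def prod.reindex[OF inj])
  have G: "G_gamma T gam = chain_exp T n (FD D)"
    by (rule ext) (simp only: G_gamma_def m_def[symmetric] n_def[symmetric] F)
  have fD: "finite D" using fin by (simp add: D_def)
  have sD: "D \<subseteq> {0..n}" using fin by (auto simp: D_def n_def intro!: diff_le_mono Max_ge)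
  have nD: "n \<in> D" using fin ne by (auto simp: D_def n_def)
  have zD: "0 \<in> D" using fin ne by (auto simp: D_def m_def intro!: image_eqI[where x="Min gam"] Min_in)
  have cD: "card D = card gam" unfolding D_def by (rule card_image[OF inj])
  have "info True (card gam) (G_gamma T gam)"
    using main_ind[OF fD sD nD] zD by (simp add: G cD)
  then show ?thesis by (auto simp: info_def ok_def)
qed

end


lemma final_ineq:
  fixes x r :: real and k :: nat
  assumes x: "0 < x" "x \<le> 1" and r: "1 \<le> r"
  shows "x ^ (k div 2) * r ^ ((k - 1) div 2) \<le> (1 / sqrt x) * (sqrt x ^ k * sqrt r ^ k)"
proof -
  have sx: "0 < sqrt x" "sqrt x \<le> 1" using x by auto
  have sr: "1 \<le> sqrt r" using r by simp
  have r0: "0 < r" using r by simp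
  show ?thesis
  proof (cases "even k")
    case True
    then obtain m where k: "k = 2 * m" by (auto elim: evenE)
    have e1: "sqrt x ^ k = x ^ m" using x by (simp add: k power_mult real_sqrt_pow2)
    have e2: "sqrt r ^ k = r ^ m" using r by (simp add: k power_mult real_sqrt_pow2)
    have "x ^ (k div 2) * r ^ ((k - 1) div 2) = x ^ m * r ^ ((2 * m - 1) div 2)" by (simp add: k)
    also have "\<dots> \<le> x ^ m * r ^ m"
      using x r by (intro mult_left_mono power_increasing) auto
    also have "\<dots> \<le> (1 / sqrt x) * (x ^ m * r ^ m)"
    proof -
      have "1 \<le> 1 / sqrt x" using sx by (simp add: field_simps)
      moreover have "0 \<le> x ^ m * r ^ m" using x r0 by simp
      ultimately have "1 * (x ^ m * r ^ m) \<le> (1 / sqrt x) * (x ^ m * r ^ m)" by (rule mult_right_mono)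
      then show ?thesis by simp
    qed
    finally show ?thesis by (simp add: e1 e2)
  next
    case False
    then obtain m where k: "k = 2 * m + 1" by (auto elim: oddE)
    have e1: "sqrt x ^ k = x ^ m * sqrt x" using x by (simp add: k power_add power_mult real_sqrt_pow2)
    have e2: "sqrt r ^ k = r ^ m * sqrt r" using r by (simp add: k power_add power_mult real_sqrt_pow2)
    have "x ^ (k div 2) * r ^ ((k - 1) div 2) = x ^ m * r ^ m" by (simp add: k)
    also have "\<dots> \<le> x ^ m * r ^ m * sqrt r"
    proof -
      have "0 \<le> x ^ m * r ^ m" using x r0 by simp
      then have "x ^ m * r ^ m * 1 \<le> x ^ m * r ^ m * sqrt r" by (rule mult_left_mono[OF sr])
      then show ?thesis by simp
    qed
    also have "\<dots> = (1 / sqrt x) * (sqrt x ^ k * sqrt r ^ k)" using sx by (simp add: e1 e2 field_simps)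
    finally show ?thesis .
  qed
qed

lemma final_C:
  fixes M mubar :: real
  assumes M: "1 \<le> M" and mu: "0 < mubar" "mubar < 1"
  shows "M ^ k * mubar ^ (k div 2) * (1 + 2 * mubar) ^ ((k - 1) div 2)
             \<le> (1 / sqrt mubar) * (M * sqrt (mubar * (1 + 2 * mubar))) ^ k"
proof -
  have "M ^ k * (mubar ^ (k div 2) * (1 + 2 * mubar) ^ ((k - 1) div 2)) \<le> M ^ k * ((1 / sqrt mubar) * (sqrt mubar ^ k * sqrt (1 + 2 * mubar) ^ k))"
    using M mu by (intro mult_left_mono final_ineq) auto
  moreover have "(M * sqrt (mubar * (1 + 2 * mubar))) ^ k = M ^ k * (sqrt mubar ^ k * sqrt (1 + 2 * mubar) ^ k)"
    unfolding real_sqrt_mult power_mult_distrib by simp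
  ultimately show ?thesis by (simp only: mult.assoc) (simp add: algebra_simps)
qed




theorem mainTheorem1:
  fixes P0 c :: "(int ^ 'd::finite) \<Rightarrow> real"
    and S :: "(int ^ 'd) set"
    and eps q0 q1 M mubar :: real
    and Pi :: "'d config measure"
    and rho :: "'d config \<Rightarrow> real"
  defines "T \<equiv> Top S P0 c eps q0 q1"
  assumes eps_pos: "eps > 0"
    (* P0: even, finite-range probability distribution *)
    and P0_nonneg: "\<And>u. P0 u \<ge> 0"
    and P0_even: "\<And>u. P0 (- u) = P0 u"
    and S_fin: "finite S"
    and P0_supp: "{u. P0 u \<noteq> 0} \<subseteq> S"
    and P0_sum: "(\<Sum>u\<in>S. P0 u) = 1"
    and P0_aperiodic: "\<And>l. (\<forall>i. - pi < l $ i \<and> l $ i \<le> pi) \<Longrightarrow>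
                          (cmod (p_tilde P0 l) = 1 \<longleftrightarrow> l = 0)"
    and P0_wiener: "(\<lambda>x. cmod (inv_p_fourier P0 x)) summable_on UNIV"
    (* c: odd, finite-range real function *)
    and c_odd: "\<And>u. c (- u) = - c u"
    and c_supp: "{u. c u \<noteq> 0} \<subseteq> S"
    and jump_prob: "\<And>u. 0 \<le> P0 u - eps * c u \<and> P0 u - eps * c u < 1
                         \<and> 0 \<le> P0 u + eps * c u \<and> P0 u + eps * c u < 1"
    (* Q0, Q1 symmetric stochastic 2x2 matrices; Q0 has eigenvalue mu = 1 - 2 q0, 0 < |mu| < 1 *)
    and q0_range: "0 < q0 \<and> q0 < 1 \<and> q0 \<noteq> 1/2"
    and q1_range: "0 \<le> q1 \<and> q1 \<le> 1"
    (* standing assumptions *)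
    and M_gt: "M > 1"
    and T_HM: "\<And>f. f \<in> HM M \<Longrightarrow> T f \<in> HM M"
    and rho_meas: "rho \<in> borel_measurable Pi0"
    and rho_bdd: "\<exists>B. \<forall>eta. 0 \<le> rho eta \<and> rho eta \<le> B"
    and Pi_def: "Pi = density Pi0 (\<lambda>eta. ennreal (rho eta))"
    and Pi_prob: "prob_space Pi"
    and Pi_inv: "\<And>A. A \<in> sets Pi0 \<Longrightarrow> (\<integral>eta. T (indicator A) eta \<partial>Pi) = measure Pi A"
    and mubar_range: "0 < mubar \<and> mubar < 1"
    and contraction: "\<And>f. f \<in> HM M \<Longrightarrow> (\<integral>eta. f eta \<partial>Pi) = 0 \<Longrightarrow>
                          normM M (T f) \<le> mubar * normM M f"
  shows "\<exists>C > 0. \<forall>gam :: nat set. finite gam \<and> gam \<noteq> {} \<longrightarrow>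
           G_gamma T gam \<in> HM M \<and>
           normM M (G_gamma T gam)
             \<le> M ^ card gam * mubar ^ (card gam div 2) * (1 + 2 * mubar) ^ ((card gam - 1) div 2) \<and>
           M ^ card gam * mubar ^ (card gam div 2) * (1 + 2 * mubar) ^ ((card gam - 1) div 2)
             \<le> C * (M * sqrt (mubar * (1 + 2 * mubar))) ^ card gam"
proof -
  have M1: "1 \<le> M" using M_gt by simp
  have THM: "\<And>f. f \<in> HM M \<Longrightarrow> Top S P0 c eps q0 q1 f \<in> HM M" using T_HM unfolding T_def .
  have PInv: "\<And>A. A \<in> sets Pi0 \<Longrightarrow> (\<integral>eta. Top S P0 c eps q0 q1 (indicator A) eta \<partial>Pi) = measure Pi A"
    using Pi_inv unfolding T_def .
  have Contr: "\<And>f. f \<in> HM M \<Longrightarrow> (\<integral>eta. f eta \<partial>Pi) = 0 \<Longrightarrow> normM M (Top S P0 c eps q0 q1 f) \<le> mubar * normM M f"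
    using contraction unfolding T_def .
  have sl: "setting S P0 c eps q0 q1 M mubar Pi rho"
    by (rule setting.intro[OF S_fin P0_supp c_supp P0_even c_odd P0_sum M1 THM rho_meas Pi_def Pi_prob PInv mubar_range Contr])
  interpret setting S P0 c eps q0 q1 M mubar Pi rho by (rule sl)
  have mu: "0 < mubar" "mubar < 1" using mubar_range by auto
  show ?thesis
  proof (intro exI[of _ "1 / sqrt mubar"] conjI allI impI)
    show "1 / sqrt mubar > 0" using mu by simp
    fix gam :: "nat set" assume g: "finite gam \<and> gam \<noteq> {}"
    show "G_gamma T gam \<in> HM M" using G_bound g unfolding T_def by blast
    show "normM M (G_gamma T gam) \<le> M ^ card gam * mubar ^ (card gam div 2) * (1 + 2 * mubar) ^ ((card gam - 1) div 2)"
      using G_bound g unfolding T_def bnd_def by blast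
    show "M ^ card gam * mubar ^ (card gam div 2) * (1 + 2 * mubar) ^ ((card gam - 1) div 2)
             \<le> 1 / sqrt mubar * (M * sqrt (mubar * (1 + 2 * mubar))) ^ card gam"
      using final_C[of M mubar "card gam"] M_gt mu by simp
  qed
qed


end
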